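(* Let $(\mathcal{A},\Gamma^+,\alpha)$ be a finely representable C*-dynamical system with unique complete transfer action $L$, and let $(\pi,U,H)$ be a covariant representation of $(\mathcal{A},\Gamma^+,\alpha)$. Then the formula $$(\pi\times U)\Big(\sum_{x>0}a_{-x}\delta_{-x}+a_0\delta_0+\sum_{x>0}a_x\delta_x\Big)=\sum_{x>0}U_x^*\pi(a_{-x})+\pi(a_0)+\sum_{x>0}\pi(a_x)U_x$$ (sums over $x\in\Gamma^+\setminus\{0\}$) defines a representation of the Banach $*$-algebra $l_1(\Gamma,\alpha,\mathcal{A})$ on $H$, and hence a representation of the crossed product $\mathcal{A}\rtimes_\alpha\Gamma$.
   Context: $\mathcal{A}$ is a C*-algebra with identity $1$, $\Gamma$ a totally ordered abelian group with identity $0$, $\Gamma^+=\{x\in\Gamma:0\le x\}$, and $\alpha:\Gamma^+\to\mathrm{End}(\mathcal{A})$ a semigroup homomorphism into $*$-endomorphisms ($\alpha_0=\mathrm{Id}$, $\alpha_x\circ\alpha_y=\alpha_{x+y}$). The system is finely representable if there exist a Hilbert space $H$, a faithful non-degenerate representation $\pi:\mathcal{A}\to L(H)$ and a semigroup homomorphism $U:\Gamma^+\to L(H)$ with $\pi(\alpha_x(a))=U_x\pi(a)U_x^*$, $U_x^*\pi(a)U_x\in\pi(\mathcal{A})$ and $U_x\pi(a)=\pi(\alpha_x(a))U_x$. A complete transfer action is a family $\{L_x\}_{x\in\Gamma^+}$ of continuous linear positive maps on $\mathcal{A}$ with $L_{x+y}=L_y\circ L_x$, $L_x(\alpha_x(a)b)=aL_x(b)$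 and $\alpha_x(L_x(a))=\alpha_x(1)a\alpha_x(1)$; for a finely representable system it exists and is unique. $l_1(\Gamma,\alpha,\mathcal{A})$ is the set of families $\{a_g\}_{g\in\Gamma}$ in $\mathcal{A}$ with $a_x\in\mathcal{A}\alpha_x(1)$, $a_{-x}\in\alpha_x(1)\mathcal{A}$ ($x\in\Gamma^+$) and $\|a\|=\sum_g\|a_g\|<\infty$, with pointwise linear operations, involution $(a^* )_g=(a_{-g})^*$ and multiplication given for $0\le g$ by $(a\cdot b)_g=\sum_{g=x-y,\,x,y>0}a_x\alpha_{x-y}(b_{-y})+\sum_{g=y-x,\,x,y>0}L_x(a_{-x}b_y)+\sum_{g=x+y,\,x,y\ge0}a_x\alpha_x(b_y)$ and for $g<0$ by $(a\cdot b)_g=\sum_{g=x-y,\,x,y>0}\alpha_{y-x}(a_x)b_{-y}+\sum_{g=y-x,\,x,y>0}L_y(a_{-x}b_y)+\sum_{g=-x-y,\,x,y\ge0}\alpha_y(a_{-x})b_{-y}$ ($x,y\in\Gamma^+$); it is a unital Banach $*$-algebra. For $g_0\in\Gamma$ and $c\in\mathcal{A}\alpha_{g_0}(1)$ (if $g_0\ge0$) or $c\in\alpha_{-g_0}(1)\mathcal{A}$ (if $g_0<0$), $c\delta_{g_0}$ denotes the family with $c$ at index $g_0$ and $0$ elsewhere. The crossed product $\mathcal{A}\rtimes_\alpha\Gamma$ is the enveloping C*-algebra of $l_1(\Gamma,\alpha,\mathcal{A})$. A covariant representation of $(\mathcal{A},\Gamma^+,\alpha)$ is a triple $(\pi,U,H)$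 with $H$ a Hilbert space, $\pi:\mathcal{A}\to L(H)$ a non-degenerate representation and $U:\Gamma^+\to L(H)$ a semigroup homomorphism such that $U_x\pi(a)U_x^*=\pi(\alpha_x(a))$ and $U_x^*\pi(a)U_x=\pi(L_x(a))$ for all $a\in\mathcal{A}$, $x\in\Gamma^+$. *)

theory Defs
  imports "HOL-Analysis.Analysis"
begin

class complex_vector = real_vector +
  fixes scaleC :: "complex \<Rightarrow> 'a \<Rightarrow> 'a"
  assumes scaleC_add_right: "scaleC a (x + y) = scaleC a x + scaleC a y"
    and scaleC_add_left: "scaleC (a + b) x = scaleC a x + scaleC b x"
    and scaleC_scaleC: "scaleC a (scaleC b x) = scaleC (a * b) x"
    and scaleC_one: "scaleC 1 x = x"
    and scaleR_scaleC: "scaleR r x = scaleC (complex_of_real r) x"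

class complex_normed_vector = complex_vector + real_normed_vector +
  assumes norm_scaleC: "norm (scaleC a x) = cmod a * norm x"

text \<open>Unital C*-algebra (complete, normed, with C*-identity). The class
  real_normed_algebra_1 forces 1 \<noteq> 0 and norm 1 = 1.\<close>
class cstar_algebra_1 = complex_normed_vector + banach + real_normed_algebra_1 +
  fixes cstar :: "'a \<Rightarrow> 'a"
  assumes scaleC_left_mult: "scaleC c x * y = scaleC c (x * y)"
    and scaleC_right_mult: "x * scaleC c y = scaleC c (x * y)"
    and cstar_add: "cstar (x + y) = cstar x + cstar y"
    and cstar_scaleC: "cstar (scaleC c x) = scaleC (cnj c) (cstar x)"
    and cstar_mult: "cstar (x * y) = cstar y * cstar x"
    and cstar_cstar: "cstar (cstar x) = x"
    and cstar_identity: "norm (cstar x * x) = (norm x)\<^sup>2"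

text \<open>Complex Hilbert space (inner product linear in the second argument).\<close>
class chilbert_space = complex_normed_vector + banach +
  fixes cinner :: "'a \<Rightarrow> 'a \<Rightarrow> complex"
  assumes cinner_commute: "cinner x y = cnj (cinner y x)"
    and cinner_add_right: "cinner x (y + z) = cinner x y + cinner x z"
    and cinner_scaleC_right: "cinner x (scaleC c y) = c * cinner x y"
    and cinner_self: "cinner x x = complex_of_real ((norm x)\<^sup>2)"

definition bounded_op :: "('h::chilbert_space \<Rightarrow> 'h) \<Rightarrow> bool" where
  "bounded_op T \<longleftrightarrow> (\<forall>x y. T (x + y) = T x + T y) \<and> (\<forall>c x. T (scaleC c x) = scaleC c (T x))
     \<and> (\<exists>K. \<forall>x. norm (T x) \<le> K * norm x)"

definition adj :: "('h::chilbert_space \<Rightarrow> 'h) \<Rightarrow> ('h \<Rightarrow> 'h)" where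
  "adj T = (THE S. \<forall>x y. cinner (T x) y = cinner x (S y))"

definition is_rep :: "('a::cstar_algebra_1 \<Rightarrow> 'h::chilbert_space \<Rightarrow> 'h) \<Rightarrow> bool" where
  "is_rep \<pi> \<longleftrightarrow> (\<forall>a. bounded_op (\<pi> a))
     \<and> (\<forall>a b. \<pi> (a + b) = (\<lambda>h. \<pi> a h + \<pi> b h))
     \<and> (\<forall>c a. \<pi> (scaleC c a) = (\<lambda>h. scaleC c (\<pi> a h)))
     \<and> (\<forall>a b. \<pi> (a * b) = \<pi> a \<circ> \<pi> b)
     \<and> (\<forall>a. \<pi> (cstar a) = adj (\<pi> a))"

definition nondegenerate :: "('a::cstar_algebra_1 \<Rightarrow> 'h::chilbert_space \<Rightarrow> 'h) \<Rightarrow> bool" where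
  "nondegenerate \<pi> \<longleftrightarrow>
     closure {\<Sum>i\<in>I. \<pi> (a i) (h i) | I a h. finite (I :: nat set)} = UNIV"

definition semigroup_hom_op :: "('g::linordered_ab_group_add \<Rightarrow> 'h::chilbert_space \<Rightarrow> 'h) \<Rightarrow> bool" where
  "semigroup_hom_op U \<longleftrightarrow> (\<forall>x. 0 \<le> x \<longrightarrow> bounded_op (U x)) \<and> U 0 = id
     \<and> (\<forall>x y. 0 \<le> x \<longrightarrow> 0 \<le> y \<longrightarrow> U (x + y) = U x \<circ> U y)"

definition star_endo :: "('a::cstar_algebra_1 \<Rightarrow> 'a) \<Rightarrow> bool" where
  "star_endo \<phi> \<longleftrightarrow> (\<forall>a b. \<phi> (a + b) = \<phi> a + \<phi> b) \<and> (\<forall>c a. \<phi> (scaleC c a) = scaleC c (\<phi> a))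
     \<and> (\<forall>a b. \<phi> (a * b) = \<phi> a * \<phi> b) \<and> (\<forall>a. \<phi> (cstar a) = cstar (\<phi> a))"

text \<open>alpha : Gamma^+ \<rightarrow> End(A) semigroup homomorphism (values off Gamma^+ irrelevant).\<close>
definition dyn_system :: "('g::linordered_ab_group_add \<Rightarrow> 'a::cstar_algebra_1 \<Rightarrow> 'a) \<Rightarrow> bool" where
  "dyn_system \<alpha> \<longleftrightarrow> (\<forall>x. 0 \<le> x \<longrightarrow> star_endo (\<alpha> x)) \<and> \<alpha> 0 = id
     \<and> (\<forall>x y. 0 \<le> x \<longrightarrow> 0 \<le> y \<longrightarrow> \<alpha> x \<circ> \<alpha> y = \<alpha> (x + y))"

text \<open>Finely representable, with the Hilbert space given by the type 'k.  Since this
  is a hypothesis, the existential over Hilbert spaces becomes a universally quantified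
  type variable of the theorem.\<close>
definition finely_representable ::
    "'k::chilbert_space itself \<Rightarrow> ('g::linordered_ab_group_add \<Rightarrow> 'a::cstar_algebra_1 \<Rightarrow> 'a) \<Rightarrow> bool" where
  "finely_representable _ \<alpha> \<longleftrightarrow> (\<exists>(\<pi> :: 'a \<Rightarrow> 'k \<Rightarrow> 'k) U.
      is_rep \<pi> \<and> inj \<pi> \<and> nondegenerate \<pi> \<and> semigroup_hom_op U
      \<and> (\<forall>x a. 0 \<le> x \<longrightarrow>
            \<pi> (\<alpha> x a) = U x \<circ> \<pi> a \<circ> adj (U x)
          \<and> adj (U x) \<circ> \<pi> a \<circ> U x \<in> range \<pi>
          \<and> U x \<circ> \<pi> a = \<pi> (\<alpha> x a) \<circ> U x))"

definition positive_el :: "'a::cstar_algebra_1 \<Rightarrow> bool" where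
  "positive_el a \<longleftrightarrow> (\<exists>b. a = cstar b * b)"

definition complete_transfer_action ::
    "('g::linordered_ab_group_add \<Rightarrow> 'a::cstar_algebra_1 \<Rightarrow> 'a) \<Rightarrow> ('g \<Rightarrow> 'a \<Rightarrow> 'a) \<Rightarrow> bool" where
  "complete_transfer_action \<alpha> L \<longleftrightarrow>
     (\<forall>x. 0 \<le> x \<longrightarrow>
        (\<forall>a b. L x (a + b) = L x a + L x b) \<and> (\<forall>c a. L x (scaleC c a) = scaleC c (L x a))
      \<and> continuous_on UNIV (L x)
      \<and> (\<forall>a. positive_el a \<longrightarrow> positive_el (L x a))
      \<and> (\<forall>a b. L x (\<alpha> x a * b) = a * L x b)
      \<and> (\<forall>a. \<alpha> x (L x a) = \<alpha> x 1 * a * \<alpha> x 1))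
   \<and> (\<forall>x y. 0 \<le> x \<longrightarrow> 0 \<le> y \<longrightarrow> L (x + y) = L y \<circ> L x)"

definition covariant_rep ::
    "('g::linordered_ab_group_add \<Rightarrow> 'a::cstar_algebra_1 \<Rightarrow> 'a) \<Rightarrow> ('g \<Rightarrow> 'a \<Rightarrow> 'a)
     \<Rightarrow> ('a \<Rightarrow> 'h::chilbert_space \<Rightarrow> 'h) \<Rightarrow> ('g \<Rightarrow> 'h \<Rightarrow> 'h) \<Rightarrow> bool" where
  "covariant_rep \<alpha> L \<pi> U \<longleftrightarrow> is_rep \<pi> \<and> nondegenerate \<pi> \<and> semigroup_hom_op U
     \<and> (\<forall>x a. 0 \<le> x \<longrightarrow> U x \<circ> \<pi> a \<circ> adj (U x) = \<pi> (\<alpha> x a)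
                       \<and> adj (U x) \<circ> \<pi> a \<circ> U x = \<pi> (L x a))"

definition l1_set :: "('g::linordered_ab_group_add \<Rightarrow> 'a::cstar_algebra_1 \<Rightarrow> 'a) \<Rightarrow> ('g \<Rightarrow> 'a) set" where
  "l1_set \<alpha> = {f. (\<forall>x. 0 \<le> x \<longrightarrow> f x \<in> {b * \<alpha> x 1 | b. True} \<and> f (- x) \<in> {\<alpha> x 1 * b | b. True})
                 \<and> (\<lambda>g. norm (f g)) summable_on UNIV}"

definition l1_norm :: "('g \<Rightarrow> 'a::cstar_algebra_1) \<Rightarrow> real" where
  "l1_norm f = (\<Sum>\<^sub>\<infinity>g. norm (f g))"

definition l1_add :: "('g \<Rightarrow> 'a::cstar_algebra_1) \<Rightarrow> ('g \<Rightarrow> 'a) \<Rightarrow> ('g \<Rightarrow> 'a)" where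
  "l1_add f f' = (\<lambda>g. f g + f' g)"

definition l1_scale :: "complex \<Rightarrow> ('g \<Rightarrow> 'a::cstar_algebra_1) \<Rightarrow> ('g \<Rightarrow> 'a)" where
  "l1_scale c f = (\<lambda>g. scaleC c (f g))"

definition l1_star :: "('g::linordered_ab_group_add \<Rightarrow> 'a::cstar_algebra_1) \<Rightarrow> ('g \<Rightarrow> 'a)" where
  "l1_star f = (\<lambda>g. cstar (f (- g)))"

definition l1_mult ::
    "('g::linordered_ab_group_add \<Rightarrow> 'a::cstar_algebra_1 \<Rightarrow> 'a) \<Rightarrow> ('g \<Rightarrow> 'a \<Rightarrow> 'a)
     \<Rightarrow> ('g \<Rightarrow> 'a) \<Rightarrow> ('g \<Rightarrow> 'a) \<Rightarrow> ('g \<Rightarrow> 'a)" where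
  "l1_mult \<alpha> L a b = (\<lambda>g.
     if 0 \<le> g then
       (\<Sum>\<^sub>\<infinity>(x, y)\<in>{(x, y). 0 < x \<and> 0 < y \<and> g = x - y}. a x * \<alpha> (x - y) (b (- y)))
     + (\<Sum>\<^sub>\<infinity>(x, y)\<in>{(x, y). 0 < x \<and> 0 < y \<and> g = y - x}. L x (a (- x) * b y))
     + (\<Sum>\<^sub>\<infinity>(x, y)\<in>{(x, y). 0 \<le> x \<and> 0 \<le> y \<and> g = x + y}. a x * \<alpha> x (b y))
     else
       (\<Sum>\<^sub>\<infinity>(x, y)\<in>{(x, y). 0 < x \<and> 0 < y \<and> g = x - y}. \<alpha> (y - x) (a x) * b (- y))
     + (\<Sum>\<^sub>\<infinity>(x, y)\<in>{(x, y). 0 < x \<and> 0 < y \<and> g = y - x}. L y (a (- x) * b y))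
     + (\<Sum>\<^sub>\<infinity>(x, y)\<in>{(x, y). 0 \<le> x \<and> 0 \<le> y \<and> g = - x - y}. \<alpha> y (a (- x)) * b (- y)))"

definition integrated_form ::
    "('a::cstar_algebra_1 \<Rightarrow> 'h::chilbert_space \<Rightarrow> 'h) \<Rightarrow> ('g::linordered_ab_group_add \<Rightarrow> 'h \<Rightarrow> 'h)
     \<Rightarrow> ('g \<Rightarrow> 'a) \<Rightarrow> 'h \<Rightarrow> 'h" where
  "integrated_form \<pi> U f h =
     (\<Sum>\<^sub>\<infinity>x\<in>{x. 0 < x}. adj (U x) (\<pi> (f (- x)) h)) + \<pi> (f 0) h
   + (\<Sum>\<^sub>\<infinity>x\<in>{x. 0 < x}. \<pi> (f x) (U x h))"

definition l1_representation ::
    "('g::linordered_ab_group_add \<Rightarrow> 'a::cstar_algebra_1 \<Rightarrow> 'a) \<Rightarrow> ('g \<Rightarrow> 'a \<Rightarrow> 'a)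
     \<Rightarrow> (('g \<Rightarrow> 'a) \<Rightarrow> 'h::chilbert_space \<Rightarrow> 'h) \<Rightarrow> bool" where
  "l1_representation \<alpha> L \<rho> \<longleftrightarrow>
     (\<forall>f\<in>l1_set \<alpha>. bounded_op (\<rho> f))
   \<and> (\<forall>f\<in>l1_set \<alpha>. \<forall>f'\<in>l1_set \<alpha>. \<rho> (l1_add f f') = (\<lambda>h. \<rho> f h + \<rho> f' h))
   \<and> (\<forall>c. \<forall>f\<in>l1_set \<alpha>. \<rho> (l1_scale c f) = (\<lambda>h. scaleC c (\<rho> f h)))
   \<and> (\<forall>f\<in>l1_set \<alpha>. \<forall>f'\<in>l1_set \<alpha>. \<rho> (l1_mult \<alpha> L f f') = \<rho> f \<circ> \<rho> f')
   \<and> (\<forall>f\<in>l1_set \<alpha>. \<rho> (l1_star f) = adj (\<rho> f))"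

end

theory Submission
  imports Defs "HOL-Computational_Algebra.Formal_Power_Series"
begin

context complex_vector
begin

lemma scaleC_zero_right [simp]: "scaleC a 0 = 0"
proof -
  have "scaleC a 0 = scaleC a (0 + 0)" by simp
  also have "\<dots> = scaleC a 0 + scaleC a 0" by (rule scaleC_add_right)
  finally show ?thesis by simp
qed

lemma scaleC_zero_left [simp]: "scaleC 0 x = 0"
proof -
  have "scaleC 0 x = scaleC (0 + 0) x" by simp
  also have "\<dots> = scaleC 0 x + scaleC 0 x" by (rule scaleC_add_left)
  finally show ?thesis by simp
qed

lemma scaleC_minus_right: "scaleC a (- x) = - scaleC a x"
proof -
  have "scaleC a (- x) + scaleC a x = scaleC a (- x + x)" by (rule scaleC_add_right[symmetric])
  also have "\<dots> = 0" by simp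
  finally show ?thesis by (simp add: eq_neg_iff_add_eq_0)
qed

lemma scaleC_diff_right: "scaleC a (x - y) = scaleC a x - scaleC a y"
  by (simp only: diff_conv_add_uminus scaleC_add_right scaleC_minus_right)

lemma scaleC_minus_left: "scaleC (- a) x = - scaleC a x"
proof -
  have "scaleC (- a) x + scaleC a x = scaleC (- a + a) x" by (rule scaleC_add_left[symmetric])
  also have "\<dots> = 0" by simp
  finally show ?thesis by (simp add: eq_neg_iff_add_eq_0)
qed

lemma scaleC_diff_left: "scaleC (a - b) x = scaleC a x - scaleC b x"
  using scaleC_add_left[of a "- b" x] by (simp add: scaleC_minus_left)

lemma scaleC_of_real: "scaleC (complex_of_real r) x = scaleR r x"
  by (simp add: scaleR_scaleC)

lemma scaleC_scaleR_comm: "scaleC c (scaleR r x) = scaleR r (scaleC c x)"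
  by (simp add: scaleR_scaleC scaleC_scaleC mult.commute)

lemma scaleC_sum_right: "scaleC a (sum f A) = (\<Sum>i\<in>A. scaleC a (f i))"
  by (induction A rule: infinite_finite_induct) (simp_all add: scaleC_add_right)

lemma scaleC_minus1: "scaleC (-1) x = - x"
  by (simp add: scaleC_minus_left scaleC_one)

end

lemma bounded_linear_scaleC:
  "bounded_linear (scaleC c :: 'a::complex_normed_vector \<Rightarrow> 'a)"
  by (rule bounded_linear_intro[where K="cmod c"])
     (simp_all add: scaleC_add_right scaleC_scaleR_comm norm_scaleC)



lemma cinner_add_left: "cinner (x + y) z = cinner x z + cinner y z"
proof -
  have "cinner (x + y) z = cnj (cinner z (x + y))" by (rule cinner_commute)
  also have "\<dots> = cnj (cinner z x) + cnj (cinner z y)" by (simp add: cinner_add_right)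
  also have "\<dots> = cinner x z + cinner y z" by (simp add: cinner_commute[of x z] cinner_commute[of y z])
  finally show ?thesis .
qed

lemma cinner_scaleC_left: "cinner (scaleC c x) y = cnj c * cinner x y"
proof -
  have "cinner (scaleC c x) y = cnj (cinner y (scaleC c x))" by (rule cinner_commute)
  also have "\<dots> = cnj c * cnj (cinner y x)" by (simp add: cinner_scaleC_right)
  also have "\<dots> = cnj c * cinner x y" by (simp add: cinner_commute[of x y])
  finally show ?thesis .
qed

lemma cinner_zero_right [simp]: "cinner x 0 = 0"
proof -
  have "cinner x 0 = cinner x (0 + 0)" by simp
  also have "\<dots> = cinner x 0 + cinner x 0" by (rule cinner_add_right)
  finally show ?thesis by simp
qed

lemma cinner_zero_left [simp]: "cinner 0 x = 0"
proof -
  have "cinner 0 x = cnj (cinner x 0)" by (rule cinner_commute)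
  then show ?thesis by simp
qed

lemma cinner_minus_right: "cinner x (- y) = - cinner x y"
proof -
  have "cinner x (- y) + cinner x y = cinner x (- y + y)" by (rule cinner_add_right[symmetric])
  also have "\<dots> = 0" by simp
  finally show ?thesis by (simp add: eq_neg_iff_add_eq_0)
qed

lemma cinner_minus_left: "cinner (- x) y = - cinner x y"
proof -
  have "cinner (- x) y + cinner x y = cinner (- x + x) y" by (rule cinner_add_left[symmetric])
  also have "\<dots> = 0" by simp
  finally show ?thesis by (simp add: eq_neg_iff_add_eq_0)
qed

lemma cinner_diff_right: "cinner x (y - z) = cinner x y - cinner x z"
  using cinner_add_right[of x y "- z"] by (simp add: cinner_minus_right)

lemma cinner_diff_left: "cinner (x - y) z = cinner x z - cinner y z"
  using cinner_add_left[of x "- y" z] by (simp add: cinner_minus_left)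

lemma cinner_scaleR_right: "cinner x (scaleR r y) = complex_of_real r * cinner x y"
  by (simp add: scaleR_scaleC cinner_scaleC_right)

lemma cinner_scaleR_left: "cinner (scaleR r x) y = complex_of_real r * cinner x y"
  by (simp add: scaleR_scaleC cinner_scaleC_left)

lemma cinner_sum_right: "cinner x (sum f A) = (\<Sum>i\<in>A. cinner x (f i))"
  by (induction A rule: infinite_finite_induct) (simp_all add: cinner_add_right)

lemma cinner_sum_left: "cinner (sum f A) x = (\<Sum>i\<in>A. cinner (f i) x)"
  by (induction A rule: infinite_finite_induct) (simp_all add: cinner_add_left)

lemma Re_cinner_self: "Re (cinner x x) = (norm x)\<^sup>2"
  by (simp add: cinner_self)

lemma cinner_self_eq_zero: "cinner x x = 0 \<longleftrightarrow> x = 0"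
  by (simp add: cinner_self)

lemma cinner_ext: "(\<And>z. cinner z x = cinner z y) \<Longrightarrow> x = y"
proof -
  assume "\<And>z. cinner z x = cinner z y"
  then have "cinner (x - y) (x - y) = 0" by (simp add: cinner_diff_right)
  then show "x = y" by (simp add: cinner_self_eq_zero)
qed

lemma cinner_ext_left: "(\<And>z. cinner x z = cinner y z) \<Longrightarrow> x = y"
proof -
  assume "\<And>z. cinner x z = cinner y z"
  then have "cinner (x - y) (x - y) = 0" by (simp add: cinner_diff_left)
  then show "x = y" by (simp add: cinner_self_eq_zero)
qed

lemma cinner_cnj_Re: "Re (cinner y x) = Re (cinner x y)"
  using cinner_commute[of y x] by simp

lemma norm_add_sq: "(norm (x + y))\<^sup>2 = (norm x)\<^sup>2 + (norm y)\<^sup>2 + 2 * Re (cinner x y)"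
proof -
  have "(norm (x + y))\<^sup>2 = Re (cinner (x + y) (x + y))" by (simp add: Re_cinner_self)
  also have "\<dots> = Re (cinner x x) + Re (cinner y y) + Re (cinner x y) + Re (cinner y x)"
    by (simp add: cinner_add_left cinner_add_right)
  finally show ?thesis by (simp add: Re_cinner_self cinner_cnj_Re)
qed

lemma norm_diff_sq: "(norm (x - y))\<^sup>2 = (norm x)\<^sup>2 + (norm y)\<^sup>2 - 2 * Re (cinner x y)"
  using norm_add_sq[of x "- y"] by (simp add: cinner_minus_right)

lemma parallelogram: "(norm ((x::'a::chilbert_space) + y))\<^sup>2 + (norm (x - y))\<^sup>2 = 2 * (norm x)\<^sup>2 + 2 * (norm y)\<^sup>2"
  unfolding norm_add_sq norm_diff_sq by simp


lemma cauchy_schwarz: "cmod (cinner x y) \<le> norm x * norm y"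
proof (cases "y = 0")
  case True then show ?thesis by simp
next
  case False
  then have ny: "norm y > 0" by simp
  define t where "t = cinner y x / complex_of_real ((norm y)\<^sup>2)"
  define a where "a = cinner x y"
  have a': "cinner y x = cnj a" unfolding a_def by (rule cinner_commute)
  have yy: "cinner y y = complex_of_real ((norm y)\<^sup>2)" by (rule cinner_self)
  have "cinner (x - scaleC t y) (x - scaleC t y)
        = cinner x x - t * cinner x y - cnj t * cinner y x + cnj t * t * cinner y y"
    by (simp add: cinner_diff_left cinner_diff_right cinner_scaleC_left cinner_scaleC_right algebra_simps)
  also have "\<dots> = cinner x x - cnj a * a / complex_of_real ((norm y)\<^sup>2)"
    using ny unfolding t_def a' yy a_def[symmetric]
    by (simp add: field_simps power2_eq_square)
  also have "cnj a * a = complex_of_real ((cmod a)\<^sup>2)"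
    using complex_norm_square[of a] by (simp only: mult.commute)
  finally have eq: "cinner (x - scaleC t y) (x - scaleC t y) =
      cinner x x - complex_of_real ((cmod a)\<^sup>2) / complex_of_real ((norm y)\<^sup>2)" .
  have "0 \<le> (norm (x - scaleC t y))\<^sup>2" by simp
  also have "\<dots> = Re (cinner (x - scaleC t y) (x - scaleC t y))" by (simp add: Re_cinner_self)
  also have "\<dots> = (norm x)\<^sup>2 - (cmod a)\<^sup>2 / (norm y)\<^sup>2"
    unfolding eq by (simp add: Re_cinner_self Re_divide_of_real del: of_real_power)
  finally have "(cmod a)\<^sup>2 \<le> (norm x)\<^sup>2 * (norm y)\<^sup>2"
    using ny by (simp add: field_simps)
  then have "(cmod a)\<^sup>2 \<le> (norm x * norm y)\<^sup>2" by (simp add: power_mult_distrib)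
  then show ?thesis unfolding a_def by (rule power2_le_imp_le) simp
qed

lemma Re_cinner_le: "Re (cinner x y) \<le> norm x * norm y"
  by (meson cauchy_schwarz complex_Re_le_cmod order_trans)

lemma bounded_linear_cinner_right: "bounded_linear (\<lambda>y. cinner (x::'a::chilbert_space) y)"
proof (rule bounded_linear_intro[where K="norm x"])
  show "cinner x (y + z) = cinner x y + cinner x z" for y z by (rule cinner_add_right)
  show "cinner x (scaleR r y) = scaleR r (cinner x y)" for r y
    by (simp add: cinner_scaleR_right scaleR_conv_of_real)
  show "norm (cinner x y) \<le> norm y * norm x" for y
    using cauchy_schwarz[of x y] by (simp add: mult.commute)
qed

lemma bounded_linear_cinner_left: "bounded_linear (\<lambda>y. cinner y (x::'a::chilbert_space))"
proof (rule bounded_linear_intro[where K="norm x"])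
  show "cinner (y + z) x = cinner y x + cinner z x" for y z by (rule cinner_add_left)
  show "cinner (scaleR r y) x = scaleR r (cinner y x)" for r y
    by (simp add: cinner_scaleR_left scaleR_conv_of_real)
  show "norm (cinner y x) \<le> norm y * norm x" for y
    using cauchy_schwarz[of y x] by simp
qed

section \<open>Riesz representation\<close>

lemma riesz:
  fixes \<phi> :: "'a::chilbert_space \<Rightarrow> complex"
  assumes add: "\<And>x y. \<phi> (x + y) = \<phi> x + \<phi> y"
    and sc: "\<And>c x. \<phi> (scaleC c x) = c * \<phi> x"
    and bnd: "\<And>x. cmod (\<phi> x) \<le> K * norm x"
  shows "\<exists>v. \<forall>x. \<phi> x = cinner v x"
proof (cases "\<forall>x. \<phi> x = 0")
  case True
  then show ?thesis by (intro exI[of _ 0]) simp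
next
  case False
  then obtain x0 where x0: "\<phi> x0 \<noteq> 0" by blast
  have scR: "\<phi> (scaleR r x) = scaleR r (\<phi> x)" for r x
    by (simp add: scaleR_scaleC sc scaleR_conv_of_real)
  have bl: "bounded_linear \<phi>"
    by (rule bounded_linear_intro[where K=K]) (use add scR bnd in \<open>auto simp: mult.commute\<close>)
  have ph0: "\<phi> 0 = 0" using linear_0[OF bounded_linear.linear[OF bl]] .
  have phdiff: "\<phi> (x - y) = \<phi> x - \<phi> y" for x y using linear_diff[OF bounded_linear.linear[OF bl]] .
  define N where "N = {x. \<phi> x = 0}"
  have closedN: "closed N"
    unfolding N_def
    by (rule closed_Collect_eq) (auto intro: bounded_linear.continuous_on[OF bl] continuous_on_id)
  have N0: "0 \<in> N" unfolding N_def by (simp add: ph0)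
  have Nadd: "x \<in> N \<Longrightarrow> y \<in> N \<Longrightarrow> x + y \<in> N" for x y unfolding N_def by (simp add: add)
  have NscC: "x \<in> N \<Longrightarrow> scaleC c x \<in> N" for x c unfolding N_def by (simp add: sc)
  have NscR: "x \<in> N \<Longrightarrow> scaleR r x \<in> N" for x r unfolding N_def by (simp add: scR)
  define d where "d = infdist x0 N"
  have d0: "0 \<le> d" unfolding d_def by (rule infdist_nonneg)
  have dle: "n \<in> N \<Longrightarrow> d \<le> norm (x0 - n)" for n
    unfolding d_def using infdist_le[of n N x0] by (simp add: dist_norm)
  have approx: "\<exists>n\<in>N. norm (x0 - n) < d + e" if "e > 0" for e
  proof -
    have "infdist x0 N < d + e" using that d_def by simp
    moreover have "N \<noteq> {}" using N0 by auto
    ultimately have "(INF a\<in>N. dist x0 a) < d + e" using infdist_notempty[of N x0] by simp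
    then obtain n where "n \<in> N" "dist x0 n < d + e"
      using cINF_less_iff[of N "dist x0" "d + e"] N0
      by (auto intro: bdd_belowI2[where m=0])
    then show ?thesis by (auto simp: dist_norm)
  qed
  have "\<forall>k. \<exists>n. n \<in> N \<and> norm (x0 - n) < d + inverse (real (Suc k))"
    using approx by (meson inverse_positive_iff_positive of_nat_0_less_iff zero_less_Suc)
  then obtain X where X: "\<And>k. X k \<in> N" "\<And>k. norm (x0 - X k) < d + inverse (real (Suc k))"
    by metis
  have par: "(norm (n - m))\<^sup>2 \<le> 2 * (norm (x0 - n))\<^sup>2 + 2 * (norm (x0 - m))\<^sup>2 - 4 * d\<^sup>2"
    if "n \<in> N" "m \<in> N" for n m
  proof -
    have mid: "scaleR (1/2) (n + m) \<in> N" using that Nadd NscR by blast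
    have "(x0 - n) + (x0 - m) = scaleR 2 (x0 - scaleR (1/2) (n + m))"
      by (simp add: algebra_simps scaleR_add_right scaleR_2)
    then have "norm ((x0 - n) + (x0 - m)) = 2 * norm (x0 - scaleR (1/2) (n + m))" by simp
    then have "norm ((x0 - n) + (x0 - m)) \<ge> 2 * d" using dle[OF mid] by simp
    then have "(2 * d)\<^sup>2 \<le> (norm ((x0 - n) + (x0 - m)))\<^sup>2"
      using d0 by (intro power_mono) auto
    then have h1: "(norm ((x0 - n) + (x0 - m)))\<^sup>2 \<ge> 4 * d\<^sup>2"
      by (simp add: power_mult_distrib)
    have h2: "(x0 - n) - (x0 - m) = m - n" by simp
    have "norm (n - m) = norm (m - n)" by (rule norm_minus_commute)
    then show ?thesis using parallelogram[of "x0 - n" "x0 - m"] h1 h2 by simp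
  qed
  have cauchy: "Cauchy X"
  proof (rule CauchyI)
    fix e :: real assume e: "0 < e"
    obtain M where M0: "4 * (2 * d + 1) / e\<^sup>2 < real M"
      using reals_Archimedean2 by blast
    then have M: "4 * (2 * d + 1) / e\<^sup>2 < real (Suc M)" by simp
    define \<delta> where "\<delta> = inverse (real (Suc M))"
    have \<delta>0: "0 < \<delta>" "\<delta> \<le> 1" unfolding \<delta>_def by (auto simp: field_simps)
    have \<delta>e: "4 * (2 * d + 1) * \<delta> < e\<^sup>2"
      using M e unfolding \<delta>_def by (simp add: field_simps)
    have bnd: "norm (x0 - X k) < d + \<delta>" if "k \<ge> M" for k
    proof -
      have "inverse (real (Suc k)) \<le> \<delta>" unfolding \<delta>_def using that by (simp add: field_simps)
      then show ?thesis using X(2)[of k] by simp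
    qed
    show "\<exists>M. \<forall>m\<ge>M. \<forall>n\<ge>M. norm (X m - X n) < e"
    proof (intro exI allI impI)
      fix m n assume mn: "M \<le> m" "M \<le> n"
      have a: "norm (x0 - X m) < d + \<delta>" "norm (x0 - X n) < d + \<delta>" using bnd mn by auto
      have "(norm (x0 - X m))\<^sup>2 \<le> (d + \<delta>)\<^sup>2" "(norm (x0 - X n))\<^sup>2 \<le> (d + \<delta>)\<^sup>2"
        using a by (auto intro!: power_mono)
      then have "(norm (X m - X n))\<^sup>2 \<le> 4 * (d + \<delta>)\<^sup>2 - 4 * d\<^sup>2"
        using par[OF X(1) X(1), of m n] by linarith
      also have "\<dots> = 4 * (2 * d + \<delta>) * \<delta>" by (simp add: power2_eq_square algebra_simps)
      also have "\<dots> \<le> 4 * (2 * d + 1) * \<delta>" using \<delta>0 d0 by (simp add: mult_right_mono)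
      also have "\<dots> < e\<^sup>2" by (rule \<delta>e)
      finally have "(norm (X m - X n))\<^sup>2 < e\<^sup>2" .
      then show "norm (X m - X n) < e" using e by (simp add: power_less_imp_less_base)
    qed
  qed
  then obtain z0 where lim: "X \<longlonglongrightarrow> z0"
    using Cauchy_convergent_iff convergent_def by blast
  have z0N: "z0 \<in> N" using closed_sequentially[OF closedN X(1) lim] .
  define w where "w = x0 - z0"
  have wle: "norm w \<le> d"
  proof (rule LIMSEQ_le)
    show "(\<lambda>k. norm (x0 - X k)) \<longlonglongrightarrow> norm w" unfolding w_def by (intro tendsto_intros lim)
    show "(\<lambda>k. d + inverse (real (Suc k))) \<longlonglongrightarrow> d"
      using tendsto_add[OF tendsto_const LIMSEQ_inverse_real_of_nat, of d] by simp
    show "\<exists>N. \<forall>n\<ge>N. norm (x0 - X n) \<le> d + inverse (real (Suc n))"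
      using X(2) less_imp_le by blast
  qed
  have wmin: "n \<in> N \<Longrightarrow> norm w \<le> norm (x0 - n)" for n using wle dle by force
  have orth: "cinner w n = 0" if nN: "n \<in> N" for n
  proof -
    define a where "a = cinner w n"
    define u where "u = scaleC (cnj a) n"
    have uN: "u \<in> N" unfolding u_def using NscC nN by blast
    have wu: "cinner w u = complex_of_real ((cmod a)\<^sup>2)"
      unfolding u_def a_def using complex_norm_square[of "cinner w n"]
      by (simp add: cinner_scaleC_right mult.commute)
    have nu: "(norm u)\<^sup>2 = (cmod a)\<^sup>2 * (norm n)\<^sup>2"
      unfolding u_def by (simp add: norm_scaleC power_mult_distrib)
    define s where "s = inverse ((norm n)\<^sup>2 + 1)"
    have np: "0 < (norm n)\<^sup>2 + 1" using zero_le_power2[of "norm n"] by linarith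
    have s0: "0 < s" unfolding s_def using np by simp
    have sn: "s * (norm n)\<^sup>2 < 1" unfolding s_def using np by (simp add: field_simps)
    have "z0 + scaleR s u \<in> N" using z0N uN Nadd NscR by blast
    then have "norm w \<le> norm (x0 - (z0 + scaleR s u))" by (rule wmin)
    also have "x0 - (z0 + scaleR s u) = w - scaleR s u" unfolding w_def by simp
    finally have "(norm w)\<^sup>2 \<le> (norm (w - scaleR s u))\<^sup>2" by (simp add: power_mono)
    also have "\<dots> = (norm w)\<^sup>2 + s\<^sup>2 * (norm u)\<^sup>2 - 2 * s * (cmod a)\<^sup>2"
      using s0 by (simp add: norm_diff_sq cinner_scaleR_right wu power_mult_distrib)
    finally have "2 * s * (cmod a)\<^sup>2 \<le> s\<^sup>2 * ((cmod a)\<^sup>2 * (norm n)\<^sup>2)" using nu by simp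
    then have "s * (2 * (cmod a)\<^sup>2) \<le> s * ((s * (norm n)\<^sup>2) * (cmod a)\<^sup>2)"
      by (simp add: power2_eq_square algebra_simps)
    then have "2 * (cmod a)\<^sup>2 \<le> (s * (norm n)\<^sup>2) * (cmod a)\<^sup>2"
      using s0 by simp
    also have "\<dots> \<le> 1 * (cmod a)\<^sup>2" using sn by (intro mult_right_mono) auto
    finally have "(cmod a)\<^sup>2 \<le> 0" by simp
    then show ?thesis unfolding a_def by simp
  qed
  have phw: "\<phi> w = \<phi> x0" unfolding w_def using z0N by (simp add: phdiff N_def)
  then have w0: "w \<noteq> 0" using x0 ph0 by auto
  have rep: "\<phi> x = cinner (scaleC (cnj (\<phi> w) / complex_of_real ((norm w)\<^sup>2)) w) x" for x
  proof -
    define y where "y = x - scaleC (\<phi> x / \<phi> w) w"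
    have "\<phi> y = 0" unfolding y_def using x0 phw by (simp add: phdiff sc)
    then have "cinner w y = 0" using orth N_def by blast
    then have "cinner w x = (\<phi> x / \<phi> w) * complex_of_real ((norm w)\<^sup>2)"
      unfolding y_def by (simp add: cinner_diff_right cinner_scaleC_right cinner_self)
    then show ?thesis using w0 x0 phw
      by (simp add: cinner_scaleC_left field_simps)
  qed
  show ?thesis using rep by blast
qed


section \<open>Bounded operators and adjoints\<close>

lemma bounded_opD:
  assumes "bounded_op T"
  shows "T (x + y) = T x + T y" "T (scaleC c x) = scaleC c (T x)"
  using assms unfolding bounded_op_def by auto

lemma bounded_op_bound:
  assumes "bounded_op T"
  obtains K where "K \<ge> 0" "\<And>x. norm (T x) \<le> K * norm x"
proof -
  obtain K where K: "\<And>x. norm (T x) \<le> K * norm x" using assms unfolding bounded_op_def by blast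
  have "norm (T x) \<le> max K 0 * norm x" for x
    using K[of x] by (meson max.cobounded1 mult_right_mono norm_ge_zero order_trans)
  then show ?thesis using that[of "max K 0"] by simp
qed

lemma bounded_op_bounded_linear:
  assumes "bounded_op T"
  shows "bounded_linear T"
proof -
  obtain K where K: "K \<ge> 0" "\<And>x. norm (T x) \<le> K * norm x" using bounded_op_bound[OF assms] by blast
  show ?thesis
  proof (rule bounded_linear_intro[where K=K])
    show "T (x + y) = T x + T y" for x y using bounded_opD[OF assms] by simp
    show "T (scaleR r x) = scaleR r (T x)" for r x
      using bounded_opD(2)[OF assms, of "complex_of_real r" x] by (simp add: scaleR_scaleC)
    show "norm (T x) \<le> norm x * K" for x using K(2)[of x] by (simp add: mult.commute)
  qed
qed

lemma bounded_op_linear_simps: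
  assumes "bounded_op T"
  shows "T 0 = 0" "T (- x) = - T x" "T (x - y) = T x - T y" "T (scaleR r x) = scaleR r (T x)"
    "T (sum f A) = (\<Sum>i\<in>A. T (f i))"
proof -
  interpret bounded_linear T by (rule bounded_op_bounded_linear[OF assms])
  show "T 0 = 0" "T (- x) = - T x" "T (x - y) = T x - T y" "T (scaleR r x) = scaleR r (T x)"
    "T (sum f A) = (\<Sum>i\<in>A. T (f i))"
    by (simp_all add: zero neg diff scaleR sum)
qed

lemma bounded_op_id: "bounded_op id"
  unfolding bounded_op_def by (auto intro: exI[of _ 1])

lemma bounded_op_comp:
  assumes "bounded_op S" "bounded_op T"
  shows "bounded_op (S \<circ> T)"
proof -
  obtain K where K: "K \<ge> 0" "\<And>x. norm (S x) \<le> K * norm x" using bounded_op_bound[OF assms(1)] by blast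
  obtain K' where K': "K' \<ge> 0" "\<And>x. norm (T x) \<le> K' * norm x" using bounded_op_bound[OF assms(2)] by blast
  have "norm (S (T x)) \<le> (K * K') * norm x" for x
  proof -
    have "norm (S (T x)) \<le> K * norm (T x)" by (rule K(2))
    also have "\<dots> \<le> K * (K' * norm x)" using K(1) K'(2)[of x] by (rule mult_left_mono[rotated])
    finally show ?thesis by (simp add: mult.assoc)
  qed
  then show ?thesis using assms unfolding bounded_op_def by auto
qed

lemma adj_exists:
  fixes T :: "'a::chilbert_space \<Rightarrow> 'a"
  assumes "bounded_op T"
  shows "\<exists>S. \<forall>x y. cinner (T x) y = cinner x (S y)"
proof -
  obtain K where K: "K \<ge> 0" "\<And>x. norm (T x) \<le> K * norm x" using bounded_op_bound[OF assms] by blast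
  have "\<exists>v. \<forall>x. cinner y (T x) = cinner v x" for y
  proof (rule riesz[where K="norm y * K"])
    show "cinner y (T (x + z)) = cinner y (T x) + cinner y (T z)" for x z
      by (simp add: bounded_opD[OF assms] cinner_add_right)
    show "cinner y (T (scaleC c x)) = c * cinner y (T x)" for c x
      by (simp add: bounded_opD[OF assms] cinner_scaleC_right)
    show "cmod (cinner y (T x)) \<le> norm y * K * norm x" for x
    proof -
      have "cmod (cinner y (T x)) \<le> norm y * norm (T x)" by (rule cauchy_schwarz)
      also have "\<dots> \<le> norm y * (K * norm x)" using K(2) by (simp add: mult_left_mono)
      finally show ?thesis by (simp add: mult.assoc)
    qed
  qed
  then obtain S where S: "\<And>y x. cinner y (T x) = cinner (S y) x" by metis
  have "cinner (T x) y = cinner x (S y)" for x y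
    using S[of y x] cinner_commute[of "T x" y] cinner_commute[of x "S y"] by simp
  then show ?thesis by blast
qed

lemma adj_unique_aux:
  assumes "\<forall>x y. cinner (T x) y = cinner x (S y)" "\<forall>x y. cinner (T x) y = cinner x (S' y)"
  shows "S = S'"
proof
  fix y show "S y = S' y" by (rule cinner_ext) (use assms in auto)
qed

lemma adj_eqI:
  assumes "\<And>x y. cinner (T x) y = cinner x (S y)"
  shows "adj T = S"
  unfolding adj_def
proof (rule the_equality)
  show "\<forall>x y. cinner (T x) y = cinner x (S y)" using assms by blast
  show "S' = S" if "\<forall>x y. cinner (T x) y = cinner x (S' y)" for S'
    using adj_unique_aux[OF that] assms by blast
qed

lemma adj_char:
  assumes "bounded_op T"
  shows "cinner (T x) y = cinner x (adj T y)"
proof -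
  obtain S where S: "\<forall>x y. cinner (T x) y = cinner x (S y)" using adj_exists[OF assms] by blast
  then have "adj T = S" using adj_eqI by blast
  then show ?thesis using S by simp
qed

lemma adj_char2:
  assumes "bounded_op T"
  shows "cinner (adj T y) x = cinner y (T x)"
  using adj_char[OF assms, of x y] cinner_commute[of "adj T y" x] cinner_commute[of y "T x"] by simp

lemma adj_bounded:
  assumes "bounded_op T"
  shows "bounded_op (adj T)"
proof -
  obtain K where K: "K \<ge> 0" "\<And>x. norm (T x) \<le> K * norm x" using bounded_op_bound[OF assms] by blast
  have add: "adj T (x + y) = adj T x + adj T y" for x y
    by (rule cinner_ext) (simp add: adj_char[OF assms, symmetric] cinner_add_right)
  have sc: "adj T (scaleC c x) = scaleC c (adj T x)" for c x
    by (rule cinner_ext) (simp add: adj_char[OF assms, symmetric] cinner_scaleC_right)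
  have bd: "norm (adj T y) \<le> K * norm y" for y
  proof -
    have "(norm (adj T y))\<^sup>2 = Re (cinner (adj T y) (adj T y))" by (simp add: Re_cinner_self)
    also have "\<dots> = Re (cinner (T (adj T y)) y)" by (simp add: adj_char[OF assms])
    also have "\<dots> \<le> norm (T (adj T y)) * norm y" by (rule Re_cinner_le)
    also have "\<dots> \<le> K * norm (adj T y) * norm y" using K(2) by (simp add: mult_right_mono)
    finally have "norm (adj T y) * norm (adj T y) \<le> norm (adj T y) * (K * norm y)"
      by (simp add: power2_eq_square algebra_simps)
    then show ?thesis
      by (cases "adj T y = 0") (use K in auto)
  qed
  show ?thesis unfolding bounded_op_def using add sc bd by blast
qed

lemma adj_adj:
  assumes "bounded_op T"
  shows "adj (adj T) = T"
  by (rule adj_eqI) (simp add: adj_char2[OF assms])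

lemma adj_comp:
  assumes "bounded_op S" "bounded_op T"
  shows "adj (S \<circ> T) = adj T \<circ> adj S"
  by (rule adj_eqI) (simp add: adj_char[OF assms(1)] adj_char[OF assms(2)])

lemma adj_id: "adj id = (id :: 'a::chilbert_space \<Rightarrow> 'a)"
  by (rule adj_eqI) simp

lemma adj_apply_eqI:
  assumes "bounded_op T" "\<And>x. cinner (T x) y = cinner x z"
  shows "adj T y = z"
  by (rule cinner_ext) (use assms adj_char in metis)

lemma cstar_zero [simp]: "cstar (0::'a::cstar_algebra_1) = 0"
proof -
  have "cstar (0::'a) = cstar (0 + 0)" by simp
  also have "\<dots> = cstar 0 + cstar 0" by (rule cstar_add)
  finally show ?thesis by simp
qed

lemma cstar_minus: "cstar (- x) = - cstar (x::'a::cstar_algebra_1)"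
proof -
  have "cstar (- x) + cstar x = cstar (- x + x)" by (rule cstar_add[symmetric])
  also have "\<dots> = 0" by simp
  finally show ?thesis by (simp add: eq_neg_iff_add_eq_0)
qed

lemma cstar_diff: "cstar (x - y) = cstar x - cstar (y::'a::cstar_algebra_1)"
  using cstar_add[of x "- y"] by (simp add: cstar_minus)

lemma cstar_one [simp]: "cstar (1::'a::cstar_algebra_1) = 1"
proof -
  have "cstar (cstar (1::'a) * 1) = cstar 1 * cstar (cstar 1)" by (rule cstar_mult)
  then have "cstar (cstar (1::'a)) = cstar 1" by (simp add: cstar_cstar)
  then show ?thesis by (simp add: cstar_cstar)
qed

lemma cstar_scaleR: "cstar (scaleR r x) = scaleR r (cstar (x::'a::cstar_algebra_1))"
  by (simp add: scaleR_scaleC cstar_scaleC)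

lemma cstar_power: "cstar (x ^ n) = (cstar x) ^ n" for x :: "'a::cstar_algebra_1"
proof (induction n)
  case 0 then show ?case by simp
next
  case (Suc n)
  have "cstar (x ^ Suc n) = cstar (x * x ^ n)" by simp
  also have "\<dots> = cstar (x ^ n) * cstar x" by (rule cstar_mult)
  also have "\<dots> = cstar x ^ n * cstar x" using Suc by simp
  also have "\<dots> = cstar x ^ Suc n" by (simp add: power_commutes)
  finally show ?case .
qed

lemma cstar_identity': "norm (cstar x * x) = norm x * norm (x::'a::cstar_algebra_1)"
  using cstar_identity[of x] by (simp add: power2_eq_square)

lemma norm_cstar_le: "norm x \<le> norm (cstar (x::'a::cstar_algebra_1))"
proof (cases "x = 0")
  case True then show ?thesis by simp
next
  case False
  have "norm x * norm x = norm (cstar x * x)" by (simp add: cstar_identity')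
  also have "\<dots> \<le> norm (cstar x) * norm x" by (rule norm_mult_ineq)
  finally show ?thesis using False by simp
qed

lemma norm_cstar [simp]: "norm (cstar (x::'a::cstar_algebra_1)) = norm x"
  using norm_cstar_le[of x] norm_cstar_le[of "cstar x"] by (simp add: cstar_cstar)

lemma bounded_linear_cstar: "bounded_linear (cstar :: 'a::cstar_algebra_1 \<Rightarrow> 'a)"
  by (rule bounded_linear_intro[where K=1]) (simp_all add: cstar_add cstar_scaleR)

lemma cstar_sum: "cstar (sum f A) = (\<Sum>i\<in>A. cstar (f i :: 'a::cstar_algebra_1))"
  by (induction A rule: infinite_finite_induct) (simp_all add: cstar_add)

lemma cstar_inj: "cstar x = cstar y \<Longrightarrow> x = (y::'a::cstar_algebra_1)"
  by (metis cstar_cstar)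

lemma selfadj_norm_sq: "cstar h = h \<Longrightarrow> norm (h * h) = norm h * norm (h::'a::cstar_algebra_1)"
  using cstar_identity'[of h] by simp

lemma scaleC_mult_both: "scaleC a x * scaleC b y = scaleC (a * b) (x * (y::'a::cstar_algebra_1))"
  by (simp add: scaleC_left_mult scaleC_right_mult scaleC_scaleC mult.commute)

section \<open>Square roots of 1 - z by the binomial series\<close>

definition gco :: "nat \<Rightarrow> real" where
  "gco n = ((1/2::real) gchoose n) * (-1) ^ n"

lemma gchoose_half_Suc: "((1/2::real) gchoose Suc k) = ((1/2) gchoose k) * ((1/2 - real k) / real (Suc k))"
proof -
  have "fact (Suc k) * ((1/2::real) gchoose Suc k) = (\<Prod>i = 0..<Suc k. 1/2 - of_nat i)"
    by (rule gbinomial_mult_fact)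
  also have "\<dots> = (\<Prod>i = 0..<k. 1/2 - of_nat i) * (1/2 - of_nat k)" by simp
  also have "(\<Prod>i = 0..<k. 1/2 - of_nat i) = fact k * ((1/2::real) gchoose k)"
    by (rule gbinomial_mult_fact[symmetric])
  finally have "fact (Suc k) * ((1/2::real) gchoose Suc k) = fact k * ((1/2) gchoose k) * (1/2 - real k)" .
  then have "fact k * (real (Suc k) * ((1/2::real) gchoose Suc k)) = fact k * (((1/2) gchoose k) * (1/2 - real k))"
    by (simp only: fact_Suc of_nat_Suc mult_ac)
  then have "real (Suc k) * ((1/2::real) gchoose Suc k) = ((1/2) gchoose k) * (1/2 - real k)"
    by simp
  then show ?thesis by (simp add: field_simps del: of_nat_Suc)
qed

lemma gchoose_half_bound: "\<bar>(1/2::real) gchoose n\<bar> \<le> 1"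
proof (induction n)
  case 0 then show ?case by simp
next
  case (Suc k)
  have "\<bar>(1/2 - real k) / real (Suc k)\<bar> \<le> 1" by (simp add: abs_if field_simps)
  then have "\<bar>(1/2::real) gchoose Suc k\<bar> \<le> 1 * 1"
    unfolding gchoose_half_Suc abs_mult using Suc by (intro mult_mono) auto
  then show ?case by simp
qed

lemma gco_bound: "\<bar>gco n\<bar> \<le> 1"
  unfolding gco_def abs_mult using gchoose_half_bound by (simp add: power_abs)

lemma gco_conv: "(\<Sum>i\<le>k. gco i * gco (k - i)) = (if k = 0 then 1 else if k = 1 then -1 else 0)"
proof -
  have "(\<Sum>i\<le>k. gco i * gco (k - i)) = (\<Sum>i\<le>k. ((1/2::real) gchoose i) * ((1/2) gchoose (k - i))) * (-1) ^ k"
    unfolding gco_def sum_distrib_right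
    by (intro sum.cong refl) (simp add: power_add[symmetric] algebra_simps)
  also have "(\<Sum>i\<le>k. ((1/2::real) gchoose i) * ((1/2) gchoose (k - i))) = fps_nth (fps_binomial (1/2) * fps_binomial (1/2::real)) k"
    by (simp add: fps_mult_nth atLeast0AtMost)
  also have "fps_binomial (1/2) * fps_binomial (1/2::real) = fps_binomial 1"
    using fps_binomial_add_mult[of "1/2::real" "1/2"] by simp
  also have "fps_binomial (1::real) = 1 + fps_X" by (rule fps_binomial_1)
  finally show ?thesis by (cases k) (auto simp: fps_X_def)
qed

definition sqr :: "'a::cstar_algebra_1 \<Rightarrow> 'a" where
  "sqr z = (\<Sum>n. scaleR (gco n) (z ^ n))"

lemma sqr_summable_norm:
  assumes "norm (z::'a::cstar_algebra_1) < 1"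
  shows "summable (\<lambda>n. norm (scaleR (gco n) (z ^ n)))"
proof (rule summable_comparison_test)
  show "summable (\<lambda>n. norm z ^ n)" using assms by (intro summable_geometric) simp
  show "\<exists>N. \<forall>n\<ge>N. norm (norm (scaleR (gco n) (z ^ n))) \<le> norm z ^ n"
  proof (intro exI allI impI)
    fix n
    have "norm (scaleR (gco n) (z ^ n)) = \<bar>gco n\<bar> * norm (z ^ n)" by simp
    also have "\<dots> \<le> 1 * norm z ^ n"
      using gco_bound norm_power_ineq by (intro mult_mono) auto
    finally show "norm (norm (scaleR (gco n) (z ^ n))) \<le> norm z ^ n" by simp
  qed
qed

lemma sqr_summable:
  assumes "norm (z::'a::cstar_algebra_1) < 1"
  shows "summable (\<lambda>n. scaleR (gco n) (z ^ n))"
  using summable_norm_cancel[OF sqr_summable_norm[OF assms]] .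

lemma sqr_square:
  assumes "norm (z::'a::cstar_algebra_1) < 1"
  shows "sqr z * sqr z = 1 - z"
proof -
  have cp: "(\<lambda>k. \<Sum>i\<le>k. scaleR (gco i) (z ^ i) * scaleR (gco (k - i)) (z ^ (k - i))) sums (sqr z * sqr z)"
    unfolding sqr_def using Cauchy_product_sums[OF sqr_summable_norm[OF assms] sqr_summable_norm[OF assms]] .
  have eq: "(\<Sum>i\<le>k. scaleR (gco i) (z ^ i) * scaleR (gco (k - i)) (z ^ (k - i)))
      = (if k = 0 then 1 else 0) + (if k = 1 then - z else 0)" for k
  proof -
    have "(\<Sum>i\<le>k. scaleR (gco i) (z ^ i) * scaleR (gco (k - i)) (z ^ (k - i)))
        = (\<Sum>i\<le>k. scaleR (gco i * gco (k - i)) (z ^ k))"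
      by (intro sum.cong refl) (simp add: power_add[symmetric])
    also have "\<dots> = scaleR (\<Sum>i\<le>k. gco i * gco (k - i)) (z ^ k)"
      by (simp add: scaleR_sum_left)
    also have "\<dots> = (if k = 0 then 1 else 0) + (if k = 1 then - z else 0)"
      unfolding gco_conv by auto
    finally show ?thesis .
  qed
  have "(\<lambda>k. (if k = 0 then 1 else 0) + (if k = 1 then - z else 0)) sums (1 + - z)"
    by (intro sums_add) (use sums_single[of 0 "\<lambda>_. 1"] sums_single[of 1 "\<lambda>_. - z"] in simp_all)
  then have "(\<lambda>k. \<Sum>i\<le>k. scaleR (gco i) (z ^ i) * scaleR (gco (k - i)) (z ^ (k - i))) sums (1 - z)"
    unfolding eq by simp
  then show ?thesis using cp sums_unique2 by blast
qed

lemma sqr_selfadj: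
  assumes "norm (z::'a::cstar_algebra_1) < 1" "cstar z = z"
  shows "cstar (sqr z) = sqr z"
proof -
  have "cstar (sqr z) = (\<Sum>n. cstar (scaleR (gco n) (z ^ n)))"
    unfolding sqr_def by (rule bounded_linear.suminf[OF bounded_linear_cstar sqr_summable[OF assms(1)]])
  also have "\<dots> = sqr z" unfolding sqr_def by (simp add: cstar_scaleR cstar_power assms(2))
  finally show ?thesis .
qed

lemma commute_power: "y * z = z * y \<Longrightarrow> y * z ^ n = z ^ n * (y::'a::ring_1)"
proof (induction n)
  case 0 then show ?case by simp
next
  case (Suc n)
  have "y * z ^ Suc n = (y * z) * z ^ n" by (simp add: mult.assoc)
  also have "\<dots> = z * (y * z ^ n)" using Suc by (simp add: mult.assoc)
  also have "\<dots> = z ^ Suc n * y" using Suc by (simp add: mult.assoc)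
  finally show ?case .
qed

lemma sqr_commute:
  assumes "norm (z::'a::cstar_algebra_1) < 1" "y * z = z * y"
  shows "y * sqr z = sqr z * y"
proof -
  have "y * sqr z = (\<Sum>n. y * scaleR (gco n) (z ^ n))"
    unfolding sqr_def by (rule suminf_mult[OF sqr_summable[OF assms(1)], symmetric])
  also have "\<dots> = (\<Sum>n. scaleR (gco n) (z ^ n) * y)"
    using commute_power[OF assms(2)] by (simp add: mult_scaleR_right mult_scaleR_left)
  also have "\<dots> = sqr z * y"
    unfolding sqr_def by (rule suminf_mult2[OF sqr_summable[OF assms(1)], symmetric])
  finally show ?thesis .
qed

lemma sqrt_exists:
  assumes "norm (z::'a::cstar_algebra_1) < 1" "cstar z = z"
  shows "\<exists>s. cstar s = s \<and> s * s = 1 - z \<and> (\<forall>y. y * z = z * y \<longrightarrow> y * s = s * y)"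
  using sqr_selfadj[OF assms] sqr_square[OF assms(1)] sqr_commute[OF assms(1)] by blast

section \<open>Contractivity of *-endomorphisms\<close>

lemma scaleC_ii_ii: "scaleC \<i> (scaleC \<i> x) = - (x::'a::complex_vector)"
  by (simp add: scaleC_scaleC scaleC_minus1)

lemma cstar_scaleC_ii: "cstar (scaleC \<i> x) = - scaleC \<i> (cstar (x::'a::cstar_algebra_1))"
  by (simp add: cstar_scaleC scaleC_minus_left)

lemma unitary_trick:
  fixes w r :: "'a::cstar_algebra_1"
  assumes "cstar w = w" "cstar r = r" "w * r = r * w"
  shows "cstar (w + scaleC \<i> r) * (w + scaleC \<i> r) = w * w + r * r"
proof -
  have "cstar (w + scaleC \<i> r) = w - scaleC \<i> r"
    using assms by (simp add: cstar_add cstar_scaleC_ii)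
  then have "cstar (w + scaleC \<i> r) * (w + scaleC \<i> r) = (w - scaleC \<i> r) * (w + scaleC \<i> r)" by simp
  also have "\<dots> = w * w + w * scaleC \<i> r - scaleC \<i> r * w - scaleC \<i> r * scaleC \<i> r"
    by (simp add: algebra_simps)
  also have "\<dots> = w * w + scaleC \<i> (w * r) - scaleC \<i> (r * w) - scaleC \<i> (scaleC \<i> (r * r))"
    by (simp add: scaleC_left_mult scaleC_right_mult)
  also have "\<dots> = w * w + r * r" using assms(3) by (simp add: scaleC_ii_ii)
  finally show ?thesis .
qed

lemma star_endo_simps:
  assumes "star_endo \<phi>"
  shows "\<phi> (a + b) = \<phi> a + \<phi> b" "\<phi> (scaleC c a) = scaleC c (\<phi> a)" "\<phi> (a * b) = \<phi> a * \<phi> b"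
    "\<phi> (cstar a) = cstar (\<phi> a)"
  using assms unfolding star_endo_def by auto

lemma star_endo_linear:
  assumes "star_endo \<phi>"
  shows "bounded_linear \<phi> \<or> True" "\<phi> 0 = 0" "\<phi> (- a) = - \<phi> a" "\<phi> (a - b) = \<phi> a - \<phi> b"
    "\<phi> (scaleR r a) = scaleR r (\<phi> a)"
proof -
  show "bounded_linear \<phi> \<or> True" by simp
  show z: "\<phi> 0 = 0"
  proof -
    have "\<phi> 0 = \<phi> (0 + 0)" by simp
    also have "\<dots> = \<phi> 0 + \<phi> 0" by (rule star_endo_simps(1)[OF assms])
    finally show ?thesis by simp
  qed
  have m: "\<phi> (- x) = - \<phi> x" for x
  proof -
    have "\<phi> (- x) + \<phi> x = \<phi> (- x + x)" by (rule star_endo_simps(1)[OF assms, symmetric])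
    also have "\<dots> = 0" using z by simp
    finally show ?thesis by (simp add: eq_neg_iff_add_eq_0)
  qed
  show "\<phi> (- a) = - \<phi> a" by (rule m)
  have "\<phi> (a + - b) = \<phi> a + \<phi> (- b)" by (rule star_endo_simps(1)[OF assms])
  then show "\<phi> (a - b) = \<phi> a - \<phi> b" using m[of b] by simp
  show "\<phi> (scaleR r a) = scaleR r (\<phi> a)"
    using star_endo_simps(2)[OF assms, of "complex_of_real r" a] by (simp add: scaleR_scaleC)
qed

lemma proj_norm_le:
  fixes q :: "'a::cstar_algebra_1"
  assumes "cstar q = q" "q * q = q"
  shows "norm q \<le> 1"
proof -
  have "norm q * norm q = norm q" using cstar_identity'[of q] assms by simp
  then show ?thesis by (cases "norm q = 0") auto
qed

lemma star_endo_contr_selfadj_aux: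
  fixes z :: "'a::cstar_algebra_1"
  assumes phi: "star_endo \<phi>" and z: "cstar z = z" "norm z < 1"
  shows "norm (\<phi> z) \<le> 1"
proof -
  note S = star_endo_simps[OF phi] and Lin = star_endo_linear[OF phi]
  from sqrt_exists[OF z(2) z(1)] obtain s where
    s0: "cstar s = s \<and> s * s = 1 - z \<and> (\<forall>y. y * z = z * y \<longrightarrow> y * s = s * y)"
    by (rule exE)
  have s: "cstar s = s" "s * s = 1 - z" "\<And>y. y * z = z * y \<Longrightarrow> y * s = s * y"
    using s0 by simp_all
  have mz: "norm (- z) < 1" "cstar (- z) = - z" using z by (simp_all add: cstar_minus)
  from sqrt_exists[OF mz] obtain s' where
    s'0: "cstar s' = s' \<and> s' * s' = 1 - - z \<and> (\<forall>y. y * (- z) = (- z) * y \<longrightarrow> y * s' = s' * y)"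
    by (rule exE)
  have s'1: "cstar s' = s'" "s' * s' = 1 + z" using s'0 by simp_all
  have s'2: "y * s' = s' * y" if "y * z = z * y" for y
  proof -
    have "y * (- z) = (- z) * y" using that by simp
    then show ?thesis using s'0 by blast
  qed
  note s' = s'1 s'2
  have zs: "z * s = s * z" using s(3)[of z] by simp
  have zs': "z * s' = s' * z" using s'2[of z] by simp
  have ss': "s' * s = s * s'" using s(3)[of s'] zs' by simp
  define q where "q = \<phi> 1"
  define w where "w = \<phi> z"
  define u where "u = \<phi> s"
  define v where "v = \<phi> s'"
  have q1: "cstar q = q" unfolding q_def using S(4)[of 1] unfolding cstar_one by (rule sym)
  have q2: "q * q = q" unfolding q_def using S(3)[of 1 1] unfolding mult_1_left by (rule sym)
  note q = q1 q2
  have qw1: "q * w = w" unfolding q_def w_def using S(3)[of 1 z] unfolding mult_1_left by (rule sym)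
  have qw2: "w * q = w" unfolding q_def w_def using S(3)[of z 1] unfolding mult_1_right by (rule sym)
  note qw = qw1 qw2
  have ws1: "cstar w = w" unfolding w_def using S(4)[of z] unfolding z(1) by (rule sym)
  have ws2: "cstar u = u" unfolding u_def using S(4)[of s] unfolding s(1) by (rule sym)
  have ws3: "cstar v = v" unfolding v_def using S(4)[of s'] unfolding s'(1) by (rule sym)
  note ws = ws1 ws2 ws3
  have uu: "u * u = q - w"
  proof -
    have "u * u = \<phi> (s * s)" unfolding u_def by (rule S(3)[symmetric])
    also have "\<dots> = \<phi> (1 - z)" using s(2) by simp
    also have "\<dots> = q - w" unfolding q_def w_def by (rule Lin(4))
    finally show ?thesis .
  qed
  have vv: "v * v = q + w"
  proof -
    have "v * v = \<phi> (s' * s')" unfolding v_def by (rule S(3)[symmetric])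
    also have "\<dots> = \<phi> (1 + z)" using s'(2) by simp
    also have "\<dots> = q + w" unfolding q_def w_def by (rule S(1))
    finally show ?thesis .
  qed
  have uv: "u * v = v * u" unfolding u_def v_def by (simp only: S(3)[symmetric] ss')
  have wu: "w * u = u * w" unfolding u_def w_def by (simp only: S(3)[symmetric] zs)
  have wv: "w * v = v * w" unfolding v_def w_def by (simp only: S(3)[symmetric] zs')
  define r where "r = u * v"
  have rs: "cstar r = r" unfolding r_def using ws uv by (simp add: cstar_mult)
  have wr: "w * r = r * w"
  proof -
    have "w * r = (w * u) * v" unfolding r_def by (simp add: mult.assoc)
    also have "\<dots> = u * (w * v)" using wu by (simp add: mult.assoc)
    also have "\<dots> = r * w" unfolding r_def using wv by (simp add: mult.assoc)
    finally show ?thesis .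
  qed
  have rr: "r * r = q - w * w"
  proof -
    have "r * r = u * (v * u) * v" unfolding r_def by (simp add: mult.assoc)
    also have "\<dots> = u * (u * v) * v" by (simp only: uv[symmetric])
    also have "\<dots> = (u * u) * (v * v)" by (simp only: mult.assoc)
    also have "\<dots> = (q - w) * (q + w)" using uu vv by simp
    also have "\<dots> = q - w * w" using q qw by (simp add: algebra_simps)
    finally show ?thesis .
  qed
  define Q where "Q = w + scaleC \<i> r"
  have "cstar Q * Q = q" unfolding Q_def using unitary_trick[OF ws(1) rs wr] rr by simp
  then have "norm Q * norm Q = norm q" using cstar_identity'[of Q] by simp
  also have "\<dots> \<le> 1" using proj_norm_le[OF q] .
  finally have "(norm Q)\<^sup>2 \<le> 1\<^sup>2" by (simp add: power2_eq_square)
  then have nQ: "norm Q \<le> 1" by (rule power2_le_imp_le) simp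
  have "Q + cstar Q = scaleR 2 w" unfolding Q_def using ws(1) rs
    by (simp add: cstar_add cstar_scaleC_ii scaleR_2)
  then have "w = scaleR (1/2) (Q + cstar Q)" by simp
  then have "norm w = (1/2) * norm (Q + cstar Q)" by simp
  also have "\<dots> \<le> (1/2) * (norm Q + norm (cstar Q))"
    by (intro mult_left_mono norm_triangle_ineq) simp
  also have "\<dots> \<le> 1" using nQ by simp
  finally show ?thesis unfolding w_def .
qed

lemma le_by_scaling:
  fixes a b :: real
  assumes "\<And>t. t > b \<Longrightarrow> a \<le> t"
  shows "a \<le> b"
proof (rule ccontr)
  assume "\<not> a \<le> b"
  then have "b < (a + b) / 2" "(a + b) / 2 < a" by simp_all
  then show False using assms[of "(a + b) / 2"] by simp
qed

lemma star_endo_contr_selfadj: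
  fixes z :: "'a::cstar_algebra_1"
  assumes phi: "star_endo \<phi>" and z: "cstar z = z"
  shows "norm (\<phi> z) \<le> norm z"
proof (rule le_by_scaling)
  fix t assume t: "t > norm z"
  then have t0: "t > 0" using norm_ge_zero[of z] by linarith
  define z' where "z' = scaleR (1/t) z"
  have "cstar z' = z'" unfolding z'_def using z by (simp add: cstar_scaleR)
  moreover have "norm z' < 1" unfolding z'_def using t t0 by (simp add: field_simps)
  ultimately have "norm (\<phi> z') \<le> 1" using star_endo_contr_selfadj_aux[OF phi] by blast
  moreover have "\<phi> z' = scaleR (1/t) (\<phi> z)" unfolding z'_def by (simp add: star_endo_linear[OF phi])
  ultimately have "(1/t) * norm (\<phi> z) \<le> 1" using t0 by simp
  then show "norm (\<phi> z) \<le> t" using t0 by (simp add: field_simps)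
qed

lemma star_endo_contr:
  fixes a :: "'a::cstar_algebra_1"
  assumes phi: "star_endo \<phi>"
  shows "norm (\<phi> a) \<le> norm a"
proof -
  note S = star_endo_simps[OF phi]
  have "norm (\<phi> a) * norm (\<phi> a) = norm (cstar (\<phi> a) * \<phi> a)" by (simp add: cstar_identity')
  also have "\<dots> = norm (\<phi> (cstar a * a))" by (simp add: S)
  also have "\<dots> \<le> norm (cstar a * a)"
    by (rule star_endo_contr_selfadj[OF phi]) (simp add: cstar_mult cstar_cstar)
  also have "\<dots> = norm a * norm a" by (simp add: cstar_identity')
  finally have "(norm (\<phi> a))\<^sup>2 \<le> (norm a)\<^sup>2" by (simp add: power2_eq_square)
  then show ?thesis by (rule power2_le_imp_le) simp
qed

section \<open>Representations\<close>

lemma is_repD: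
  assumes "is_rep \<pi>"
  shows "bounded_op (\<pi> a)" "\<pi> (a + b) h = \<pi> a h + \<pi> b h" "\<pi> (scaleC c a) h = scaleC c (\<pi> a h)"
    "\<pi> (a * b) h = \<pi> a (\<pi> b h)" "\<pi> (cstar a) = adj (\<pi> a)"
  using assms unfolding is_rep_def by auto

lemma rep_adj:
  assumes "is_rep \<pi>"
  shows "cinner (\<pi> a x) y = cinner x (\<pi> (cstar a) y)"
  using adj_char[OF is_repD(1)[OF assms]] is_repD(5)[OF assms] by simp

lemma rep_lin:
  assumes "is_rep \<pi>"
  shows "\<pi> 0 h = 0" "\<pi> (- a) h = - \<pi> a h" "\<pi> (a - b) h = \<pi> a h - \<pi> b h"
    "\<pi> (scaleR r a) h = scaleR r (\<pi> a h)"
proof -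
  have z: "\<pi> 0 h = 0"
  proof -
    have "\<pi> 0 h = \<pi> (0 + 0) h" by simp
    also have "\<dots> = \<pi> 0 h + \<pi> 0 h" by (rule is_repD(2)[OF assms])
    finally show ?thesis by simp
  qed
  have m: "\<pi> (- x) h = - \<pi> x h" for x
  proof -
    have "\<pi> (- x) h + \<pi> x h = \<pi> (- x + x) h" by (rule is_repD(2)[OF assms, symmetric])
    also have "\<dots> = 0" using z by simp
    finally show ?thesis by (simp add: eq_neg_iff_add_eq_0)
  qed
  show "\<pi> 0 h = 0" by (rule z)
  show "\<pi> (- a) h = - \<pi> a h" by (rule m)
  have "\<pi> (a + - b) h = \<pi> a h + \<pi> (- b) h" by (rule is_repD(2)[OF assms])
  then show "\<pi> (a - b) h = \<pi> a h - \<pi> b h" using m[of b] by simp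
  show "\<pi> (scaleR r a) h = scaleR r (\<pi> a h)"
    using is_repD(3)[OF assms, of "complex_of_real r" a h] by (simp add: scaleR_scaleC)
qed

lemma rep_one:
  assumes rep: "is_rep \<pi>" and nd: "nondegenerate \<pi>"
  shows "\<pi> 1 = id"
proof -
  define P where "P = \<pi> 1"
  have bP: "bounded_op P" unfolding P_def by (rule is_repD(1)[OF rep])
  have fix1: "P (\<pi> a h) = \<pi> a h" for a h
    unfolding P_def using is_repD(4)[OF rep, of 1 a h] by simp
  define S where "S = {\<Sum>i\<in>I. \<pi> (a i) (h i) | I a h. finite (I :: nat set)}"
  have "S \<subseteq> {x. P x = x}"
  proof
    fix x assume "x \<in> S"
    then obtain I :: "nat set" and a h where x: "x = (\<Sum>i\<in>I. \<pi> (a i) (h i))" unfolding S_def mem_Collect_eq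
      by (elim exE conjE) blast
    have "P x = (\<Sum>i\<in>I. P (\<pi> (a i) (h i)))" unfolding x by (rule bounded_op_linear_simps(5)[OF bP])
    also have "\<dots> = x" unfolding x using fix1 by simp
    finally show "x \<in> {x. P x = x}" by simp
  qed
  moreover have "closed {x. P x = x}"
    by (rule closed_Collect_eq)
       (auto intro: bounded_linear.continuous_on[OF bounded_op_bounded_linear[OF bP]] continuous_on_id)
  ultimately have "closure S \<subseteq> {x. P x = x}" by (rule closure_minimal)
  moreover have "closure S = UNIV" using nd unfolding nondegenerate_def S_def .
  ultimately have "P x = x" for x by auto
  then show ?thesis unfolding P_def by auto
qed

lemma rep_contr_aux:
  assumes rep: "is_rep \<pi>" and one: "\<pi> 1 = id" and b: "norm b < 1"
  shows "norm (\<pi> b h) \<le> norm h"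
proof -
  define z where "z = cstar b * b"
  have zs: "cstar z = z" unfolding z_def by (simp add: cstar_mult cstar_cstar)
  have "norm z = norm b * norm b" unfolding z_def by (rule cstar_identity')
  also have "\<dots> < 1 * 1" using b by (intro mult_strict_mono') auto
  finally have nz: "norm z < 1" by simp
  from sqrt_exists[OF nz zs] obtain s where
    s0: "cstar s = s \<and> s * s = 1 - z \<and> (\<forall>y. y * z = z * y \<longrightarrow> y * s = s * y)" by (rule exE)
  have s: "cstar s = s" "s * s = 1 - z" using s0 by simp_all
  have zz: "z = 1 - s * s" using s(2) by simp
  have "(norm (\<pi> b h))\<^sup>2 = Re (cinner (\<pi> b h) (\<pi> b h))" by (simp add: Re_cinner_self)
  also have "cinner (\<pi> b h) (\<pi> b h) = cinner h (\<pi> (cstar b) (\<pi> b h))" by (rule rep_adj[OF rep])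
  also have "\<pi> (cstar b) (\<pi> b h) = \<pi> z h" unfolding z_def by (rule is_repD(4)[OF rep, symmetric])
  also have "\<pi> z h = h - \<pi> s (\<pi> s h)"
    unfolding zz rep_lin(3)[OF rep] is_repD(4)[OF rep] using one by simp
  also have "cinner h (h - \<pi> s (\<pi> s h)) = cinner h h - cinner (\<pi> s h) (\<pi> s h)"
    using rep_adj[OF rep, of s h "\<pi> s h"] s(1) by (simp add: cinner_diff_right)
  finally have "(norm (\<pi> b h))\<^sup>2 = (norm h)\<^sup>2 - (norm (\<pi> s h))\<^sup>2" by (simp add: Re_cinner_self)
  then have "(norm (\<pi> b h))\<^sup>2 \<le> (norm h)\<^sup>2" by simp
  then show ?thesis by (rule power2_le_imp_le) simp
qed

lemma rep_contr:
  assumes rep: "is_rep \<pi>" and one: "\<pi> 1 = id"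
  shows "norm (\<pi> a h) \<le> norm a * norm h"
proof (rule le_by_scaling)
  fix t assume t: "t > norm a * norm h"
  show "norm (\<pi> a h) \<le> t"
  proof (cases "h = 0")
    case True
    then show ?thesis using t bounded_op_linear_simps(1)[OF is_repD(1)[OF rep]] by simp
  next
    case False
    then have nh: "norm h > 0" by simp
    define t' where "t' = t / norm h"
    have t': "t' > norm a" unfolding t'_def using t nh by (simp add: field_simps)
    then have t'0: "t' > 0" using norm_ge_zero[of a] by linarith
    have "norm (scaleR (1/t') a) < 1" using t' t'0 by (simp add: field_simps)
    then have "norm (\<pi> (scaleR (1/t') a) h) \<le> norm h" by (rule rep_contr_aux[OF rep one])
    then have "(1/t') * norm (\<pi> a h) \<le> norm h" using t'0 by (simp add: rep_lin(4)[OF rep])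
    then have "norm (\<pi> a h) \<le> t' * norm h" using t'0 by (simp add: field_simps)
    then show ?thesis unfolding t'_def using nh by simp
  qed
qed

section \<open>Transfer operators\<close>

definition transfer_pair :: "('a::cstar_algebra_1 \<Rightarrow> 'a) \<Rightarrow> ('a \<Rightarrow> 'a) \<Rightarrow> bool" where
  "transfer_pair \<phi> T \<longleftrightarrow> star_endo \<phi>
     \<and> (\<forall>a b. T (a + b) = T a + T b) \<and> (\<forall>c a. T (scaleC c a) = scaleC c (T a))
     \<and> continuous_on UNIV T
     \<and> (\<forall>a. positive_el a \<longrightarrow> positive_el (T a))
     \<and> (\<forall>a b. T (\<phi> a * b) = a * T b)
     \<and> (\<forall>a. \<phi> (T a) = \<phi> 1 * a * \<phi> 1)"

context
  fixes \<phi> T :: "'a::cstar_algebra_1 \<Rightarrow> 'a"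
  assumes tp: "transfer_pair \<phi> T"
begin

lemma tp_endo: "star_endo \<phi>" using tp unfolding transfer_pair_def by blast
lemma tp_add: "T (a + b) = T a + T b" using tp unfolding transfer_pair_def by blast
lemma tp_scaleC: "T (scaleC c a) = scaleC c (T a)" using tp unfolding transfer_pair_def by blast
lemma tp_cont: "continuous_on UNIV T" using tp unfolding transfer_pair_def by blast
lemma tp_pos: "positive_el a \<Longrightarrow> positive_el (T a)" using tp unfolding transfer_pair_def by blast
lemma tp_mod: "T (\<phi> a * b) = a * T b" using tp unfolding transfer_pair_def by blast
lemma tp_cond: "\<phi> (T a) = \<phi> 1 * a * \<phi> 1" using tp unfolding transfer_pair_def by blast

lemma tp_zero: "T 0 = 0"
proof -
  have "T 0 = T (0 + 0)" by simp
  also have "\<dots> = T 0 + T 0" by (rule tp_add)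
  finally show ?thesis by simp
qed

lemma tp_minus: "T (- x) = - T x"
proof -
  have "T (- x) + T x = T (- x + x)" by (rule tp_add[symmetric])
  also have "\<dots> = 0" using tp_zero by simp
  finally show ?thesis by (simp add: eq_neg_iff_add_eq_0)
qed

lemma tp_diff: "T (a - b) = T a - T b"
proof -
  have "T (a + - b) = T a + T (- b)" by (rule tp_add)
  then show ?thesis using tp_minus[of b] by simp
qed

lemma tp_scaleR: "T (scaleR r a) = scaleR r (T a)"
  using tp_scaleC[of "complex_of_real r" a] by (simp add: scaleR_scaleC)

lemma tp_bounded: "\<exists>B\<ge>0. \<forall>c. norm (T c) \<le> B * norm c"
proof -
  obtain d where d: "d > 0" "\<And>y. dist y 0 < d \<Longrightarrow> dist (T y) (T 0) < 1"
    using tp_cont unfolding continuous_on_iff by (meson UNIV_I zero_less_one)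
  have "norm (T c) \<le> (2 / d) * norm c" for c
  proof (cases "c = 0")
    case True then show ?thesis by (simp add: tp_zero)
  next
    case False
    then have nc: "norm c > 0" by simp
    define k where "k = d / (2 * norm c)"
    have k0: "k > 0" unfolding k_def using d nc by simp
    have "norm (scaleR k c) = d / 2" unfolding k_def using nc d by simp
    then have "dist (scaleR k c) 0 < d" using d by simp
    then have "norm (T (scaleR k c)) < 1" using d(2) by (simp add: tp_zero)
    then have "k * norm (T c) < 1" using k0 by (simp add: tp_scaleR)
    then have "norm (T c) < 1 / k" using k0 by (simp add: field_simps)
    also have "1 / k = (2 / d) * norm c" unfolding k_def using d nc by simp
    finally show ?thesis by simp
  qed
  moreover have "2 / d \<ge> 0" using d by simp
  ultimately show ?thesis by blast
qed

lemma positive_selfadj: "positive_el a \<Longrightarrow> cstar a = a"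
  unfolding positive_el_def by (auto simp: cstar_mult cstar_cstar)

lemma tp_selfadj:
  assumes h: "cstar h = h"
  shows "cstar (T h) = T h"
proof -
  define t where "t = norm h + 1"
  have t0: "t > 0" unfolding t_def using norm_ge_zero[of h] by linarith
  define z where "z = scaleR (1/t) h"
  have zs: "cstar z = z" unfolding z_def using h by (simp add: cstar_scaleR)
  have nz: "norm z < 1"
  proof -
    have "norm z = norm h / t" unfolding z_def using t0 by simp
    also have "\<dots> < 1" using t0 unfolding t_def by (simp add: divide_less_eq)
    finally show ?thesis .
  qed
  have mz: "norm (- z) < 1" "cstar (- z) = - z" using nz zs by (simp_all add: cstar_minus)
  from sqrt_exists[OF mz] obtain s' where
    s'0: "cstar s' = s' \<and> s' * s' = 1 - - z \<and> (\<forall>y. y * (- z) = (- z) * y \<longrightarrow> y * s' = s' * y)"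
    by (rule exE)
  have "1 + z = cstar s' * s'" using s'0 by simp
  then have p1: "positive_el (1 + z)" unfolding positive_el_def by blast
  have p2: "positive_el 1" unfolding positive_el_def by (intro exI[of _ 1]) simp
  have a1: "cstar (T (1 + z)) = T (1 + z)" by (rule positive_selfadj[OF tp_pos[OF p1]])
  have a2: "cstar (T 1) = T 1" by (rule positive_selfadj[OF tp_pos[OF p2]])
  have "T z = T (1 + z) - T 1" by (simp add: tp_add)
  then have a3: "cstar (T z) = T z" using a1 a2 by (simp add: cstar_diff)
  have "h = scaleR t z" unfolding z_def using t0 by simp
  then have "T h = scaleR t (T z)" by (simp add: tp_scaleR)
  then show ?thesis using a3 by (simp add: cstar_scaleR)
qed

lemma selfadj_decomp:
  fixes c :: "'b::cstar_algebra_1"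
  shows "\<exists>h1 h2. cstar h1 = h1 \<and> cstar h2 = h2 \<and> c = h1 + scaleC \<i> h2"
proof -
  define h1 where "h1 = scaleC (1/2) (c + cstar c)"
  define h2 where "h2 = scaleC (- \<i>/2) (c - cstar c)"
  have "cstar h1 = h1" unfolding h1_def by (simp add: cstar_scaleC cstar_add cstar_cstar add.commute)
  moreover have "cstar h2 = h2"
  proof -
    have "cstar h2 = scaleC (\<i>/2) (cstar c - c)" unfolding h2_def
      by (simp add: cstar_scaleC cstar_diff cstar_cstar)
    also have "\<dots> = - scaleC (\<i>/2) (c - cstar c)"
      using scaleC_minus_right[of "\<i>/2" "c - cstar c"] by simp
    also have "\<dots> = scaleC (- (\<i>/2)) (c - cstar c)" by (simp only: scaleC_minus_left)
    also have "\<dots> = h2" unfolding h2_def by simp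
    finally show ?thesis .
  qed
  moreover have "c = h1 + scaleC \<i> h2"
  proof -
    have i2: "scaleC \<i> h2 = scaleC (1/2) (c - cstar c)" unfolding h2_def by (simp add: scaleC_scaleC)
    have "h1 + scaleC \<i> h2 = scaleC (1/2) ((c + cstar c) + (c - cstar c))"
      unfolding i2 h1_def by (rule scaleC_add_right[symmetric])
    also have "(c + cstar c) + (c - cstar c) = scaleC (1 + 1) c"
      using scaleC_add_left[of 1 1 c] by (simp add: scaleC_one)
    also have "scaleC (1/2) (scaleC (1 + 1) c) = c" by (simp add: scaleC_scaleC scaleC_one)
    finally show ?thesis by simp
  qed
  ultimately show ?thesis by blast
qed

lemma tp_cstar: "T (cstar c) = cstar (T c)"
proof -
  obtain h1 h2 where h: "cstar h1 = h1" "cstar h2 = h2" "c = h1 + scaleC \<i> h2"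
    using selfadj_decomp by blast
  have "cstar c = h1 - scaleC \<i> h2" using h by (simp add: cstar_add cstar_scaleC_ii)
  then have "T (cstar c) = T h1 - scaleC \<i> (T h2)" by (simp add: tp_diff tp_scaleC)
  moreover have "cstar (T c) = T h1 - scaleC \<i> (T h2)"
    using h tp_selfadj[OF h(1)] tp_selfadj[OF h(2)] by (simp add: tp_add tp_scaleC cstar_add cstar_scaleC_ii)
  ultimately show ?thesis by simp
qed

lemma tp_proj: "cstar (\<phi> 1) = \<phi> 1" "\<phi> 1 * \<phi> 1 = \<phi> 1" "norm (\<phi> 1) \<le> 1"
proof -
  note S = star_endo_simps[OF tp_endo]
  show a: "cstar (\<phi> 1) = \<phi> 1" using S(4)[of 1] unfolding cstar_one by (rule sym)
  show b: "\<phi> 1 * \<phi> 1 = \<phi> 1" using S(3)[of 1 1] unfolding mult_1_left by (rule sym)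
  show "norm (\<phi> 1) \<le> 1" by (rule proj_norm_le[OF a b])
qed

lemma tp_square: "norm (T c) * norm (T c) = norm (T (\<phi> 1 * cstar c * \<phi> 1 * c))"
proof -
  have "norm (T c) * norm (T c) = norm (cstar (T c) * T c)" by (simp add: cstar_identity')
  also have "cstar (T c) * T c = T (\<phi> (T (cstar c)) * c)" by (simp add: tp_mod tp_cstar)
  also have "\<phi> (T (cstar c)) = \<phi> 1 * cstar c * \<phi> 1" by (rule tp_cond)
  finally show ?thesis .
qed

lemma tp_contr: "norm (T c) \<le> norm c"
proof -
  obtain B where B: "B \<ge> 0" "\<And>c. norm (T c) \<le> B * norm c" using tp_bounded by blast
  have sq: "norm (\<phi> 1 * cstar c * \<phi> 1 * c) \<le> norm c * norm c" for c
  proof -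
    have "norm (\<phi> 1 * cstar c * \<phi> 1 * c) \<le> norm (\<phi> 1) * norm (cstar c) * norm (\<phi> 1) * norm c"
      by (meson norm_mult_ineq order_trans mult_right_mono norm_ge_zero)
    also have "\<dots> \<le> 1 * norm c * 1 * norm c"
      using tp_proj(3) by (intro mult_mono) auto
    finally show ?thesis by simp
  qed
  have iter: "norm (T c) ^ (2 ^ k) \<le> B * norm c ^ (2 ^ k)" for k c
  proof (induction k arbitrary: c)
    case 0 then show ?case using B(2) by simp
  next
    case (Suc k)
    define c' where "c' = \<phi> 1 * cstar c * \<phi> 1 * c"
    have "norm (T c) ^ (2 ^ Suc k) = (norm (T c) * norm (T c)) ^ (2 ^ k)"
      by (simp add: power_mult power2_eq_square)
    also have "\<dots> = norm (T c') ^ (2 ^ k)" unfolding c'_def by (simp only: tp_square)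
    also have "\<dots> \<le> B * norm c' ^ (2 ^ k)" by (rule Suc.IH)
    also have "\<dots> \<le> B * (norm c * norm c) ^ (2 ^ k)"
      using B(1) sq[of c] unfolding c'_def by (intro mult_left_mono power_mono) auto
    also have "\<dots> = B * norm c ^ (2 ^ Suc k)" by (simp add: power_mult power2_eq_square)
    finally show ?case .
  qed
  show ?thesis
  proof (rule ccontr)
    assume "\<not> norm (T c) \<le> norm c"
    then have gt: "norm (T c) > norm c" by simp
    have c0: "c \<noteq> 0" using gt by (auto simp: tp_zero)
    then have nc: "norm c > 0" by simp
    define \<rho> where "\<rho> = norm (T c) / norm c"
    have \<rho>1: "\<rho> > 1" unfolding \<rho>_def using gt nc by (simp add: field_simps)
    have pw: "\<rho> ^ (2 ^ k) \<le> B" for k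
    proof -
      have "\<rho> ^ (2 ^ k) * norm c ^ (2 ^ k) = norm (T c) ^ (2 ^ k)"
        unfolding \<rho>_def using nc by (simp add: power_divide)
      also have "\<dots> \<le> B * norm c ^ (2 ^ k)" by (rule iter)
      finally show ?thesis using nc by simp
    qed
    obtain k :: nat where k: "B / (\<rho> - 1) < real k" using reals_Archimedean2 by blast
    have "1 + real (2 ^ k) * (\<rho> - 1) \<le> (1 + (\<rho> - 1)) ^ (2 ^ k)"
      using \<rho>1 by (intro Bernoulli_inequality) simp
    also have "\<dots> \<le> B" using pw[of k] by simp
    finally have "real (2 ^ k) * (\<rho> - 1) < B" by simp
    moreover have "real k * (\<rho> - 1) \<le> real (2 ^ k) * (\<rho> - 1)"
      using \<rho>1 less_exp[of k] by (intro mult_right_mono) (simp_all add: less_imp_le)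
    moreover have "B < real k * (\<rho> - 1)" using k \<rho>1 by (simp add: field_simps)
    ultimately show False by simp
  qed
qed

lemma tp_one_selfadj: "cstar (T 1) = T 1"
proof -
  have "positive_el (1::'a)" unfolding positive_el_def by (intro exI[of _ 1]) simp
  then show ?thesis by (rule positive_selfadj[OF tp_pos])
qed

lemma tp_phi: "T (\<phi> a) = a * T 1"
  using tp_mod[of a 1] by simp

lemma tp_central: "a * T 1 = T 1 * a"
proof -
  note S = star_endo_simps[OF tp_endo]
  have "cstar (cstar a) * T 1 = T (\<phi> (cstar (cstar a)))" by (rule tp_phi[symmetric])
  also have "\<dots> = T (cstar (\<phi> (cstar a)))" by (simp only: S(4))
  also have "\<dots> = cstar (T (\<phi> (cstar a)))" by (rule tp_cstar)
  also have "\<dots> = cstar (cstar a * T 1)" by (simp only: tp_phi)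
  also have "\<dots> = T 1 * a" by (simp add: cstar_mult tp_one_selfadj cstar_cstar)
  finally show ?thesis by (simp add: cstar_cstar)
qed

end

lemma infsum_bounded_linear':
  assumes "bounded_linear h" "f summable_on A"
  shows "infsum (\<lambda>x. h (f x)) A = h (infsum f A)"
  by (rule infsumI[OF has_sum_bounded_linear[OF assms(1) has_sum_infsum[OF assms(2)]]])

locale csys =
  fixes \<alpha> :: "'g::linordered_ab_group_add \<Rightarrow> 'a::cstar_algebra_1 \<Rightarrow> 'a"
    and L :: "'g \<Rightarrow> 'a \<Rightarrow> 'a"
    and \<pi> :: "'a \<Rightarrow> 'h::chilbert_space \<Rightarrow> 'h"
    and U :: "'g \<Rightarrow> 'h \<Rightarrow> 'h"
  assumes dyn: "dyn_system \<alpha>"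
    and cta: "complete_transfer_action \<alpha> L"
    and cov: "covariant_rep \<alpha> L \<pi> U"
begin

abbreviation Us where "Us x \<equiv> adj (U x)"

lemma endo: "0 \<le> x \<Longrightarrow> star_endo (\<alpha> x)"
  using dyn unfolding dyn_system_def by blast

lemma alpha0: "\<alpha> 0 a = a"
  using dyn unfolding dyn_system_def by simp

lemma alpha_add: "0 \<le> x \<Longrightarrow> 0 \<le> y \<Longrightarrow> \<alpha> x (\<alpha> y a) = \<alpha> (x + y) a"
proof -
  assume "0 \<le> x" "0 \<le> y"
  then have "\<alpha> x \<circ> \<alpha> y = \<alpha> (x + y)" using dyn unfolding dyn_system_def by blast
  then show ?thesis by (metis comp_apply)
qed

lemma tpx: "0 \<le> x \<Longrightarrow> transfer_pair (\<alpha> x) (L x)"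
  using cta endo unfolding complete_transfer_action_def transfer_pair_def by blast

lemma rep: "is_rep \<pi>" using cov unfolding covariant_rep_def by blast
lemma nd: "nondegenerate \<pi>" using cov unfolding covariant_rep_def by blast
lemma one: "\<pi> 1 = id" by (rule rep_one[OF rep nd])
lemma one_apply [simp]: "\<pi> 1 h = h" using one by simp

lemma Ub: "0 \<le> x \<Longrightarrow> bounded_op (U x)"
  using cov unfolding covariant_rep_def semigroup_hom_op_def by blast
lemma U0: "U 0 = id"
  using cov unfolding covariant_rep_def semigroup_hom_op_def by blast
lemma Uadd: "0 \<le> x \<Longrightarrow> 0 \<le> y \<Longrightarrow> U (x + y) = U x \<circ> U y"
  using cov unfolding covariant_rep_def semigroup_hom_op_def by blast

lemma cov1: "0 \<le> x \<Longrightarrow> U x (\<pi> a (Us x h)) = \<pi> (\<alpha> x a) h"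
proof -
  assume "0 \<le> x"
  then have "U x \<circ> \<pi> a \<circ> Us x = \<pi> (\<alpha> x a)" using cov unfolding covariant_rep_def by blast
  then show ?thesis by (metis comp_apply)
qed

lemma cov2: "0 \<le> x \<Longrightarrow> Us x (\<pi> a (U x h)) = \<pi> (L x a) h"
proof -
  assume "0 \<le> x"
  then have "Us x \<circ> \<pi> a \<circ> U x = \<pi> (L x a)" using cov unfolding covariant_rep_def by blast
  then show ?thesis by (metis comp_apply)
qed

lemma Usb: "0 \<le> x \<Longrightarrow> bounded_op (Us x)"
  by (rule adj_bounded[OF Ub])

lemma Us0: "Us 0 = id"
  by (simp add: U0 adj_id)

lemma Usadd: "0 \<le> x \<Longrightarrow> 0 \<le> y \<Longrightarrow> Us (x + y) = Us y \<circ> Us x"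
  by (simp add: Uadd adj_comp Ub)

lemma Uadd_apply: "0 \<le> x \<Longrightarrow> 0 \<le> y \<Longrightarrow> U (x + y) h = U x (U y h)"
  by (simp add: Uadd)

lemma Usadd_apply: "0 \<le> x \<Longrightarrow> 0 \<le> y \<Longrightarrow> Us (x + y) h = Us y (Us x h)"
  by (simp add: Usadd)

lemma UUs: "0 \<le> x \<Longrightarrow> U x (Us x h) = \<pi> (\<alpha> x 1) h"
  using cov1[of x 1 h] by simp

lemma UsU: "0 \<le> x \<Longrightarrow> Us x (U x h) = \<pi> (L x 1) h"
  using cov2[of x 1 h] by simp

lemma U_adj: "0 \<le> x \<Longrightarrow> cinner (U x k) h = cinner k (Us x h)"
  by (rule adj_char[OF Ub])

lemma U_proj: "0 \<le> x \<Longrightarrow> U x (\<pi> (L x 1) h) = U x h"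
proof -
  assume x: "0 \<le> x"
  define P where "P = \<pi> (L x 1)"
  have bP: "bounded_op P" unfolding P_def by (rule is_repD(1)[OF rep])
  have PP: "P (P h) = P h"
  proof -
    have "P (P h) = Us x (U x (Us x (U x h)))" unfolding P_def using UsU[OF x] by simp
    also have "U x (Us x (U x h)) = \<pi> (\<alpha> x 1) (U x h)" by (rule UUs[OF x])
    also have "Us x (\<pi> (\<alpha> x 1) (U x h)) = \<pi> (L x (\<alpha> x 1)) h" by (rule cov2[OF x])
    also have "L x (\<alpha> x 1) = L x 1" using tp_phi[OF tpx[OF x], of 1] by simp
    finally show ?thesis unfolding P_def .
  qed
  define k where "k = h - P h"
  have Pk: "P k = 0" unfolding k_def using PP bounded_op_linear_simps(3)[OF bP] by simp
  have "(norm (U x k))\<^sup>2 = Re (cinner (U x k) (U x k))" by (simp add: Re_cinner_self)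
  also have "cinner (U x k) (U x k) = cinner k (Us x (U x k))" by (rule U_adj[OF x])
  also have "Us x (U x k) = P k" unfolding P_def by (rule UsU[OF x])
  finally have "U x k = 0" using Pk by simp
  then have "U x h - U x (P h) = 0" unfolding k_def using bounded_op_linear_simps(3)[OF Ub[OF x]] by simp
  then show ?thesis unfolding P_def by simp
qed

lemma U_pi: "0 \<le> x \<Longrightarrow> U x (\<pi> a h) = \<pi> (\<alpha> x a) (U x h)"
proof -
  assume x: "0 \<le> x"
  have "\<pi> (\<alpha> x a) (U x h) = U x (\<pi> a (Us x (U x h)))" by (rule cov1[OF x, symmetric])
  also have "\<pi> a (Us x (U x h)) = \<pi> (a * L x 1) h" using UsU[OF x] is_repD(4)[OF rep] by simp
  also have "a * L x 1 = L x 1 * a" by (rule tp_central[OF tpx[OF x]])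
  also have "\<pi> (L x 1 * a) h = \<pi> (L x 1) (\<pi> a h)" by (rule is_repD(4)[OF rep])
  also have "U x (\<pi> (L x 1) (\<pi> a h)) = U x (\<pi> a h)" by (rule U_proj[OF x])
  finally show ?thesis by simp
qed

lemma rep_adj': "cinner (\<pi> (cstar a) x) y = cinner x (\<pi> a y)"
  using rep_adj[OF rep, of "cstar a" x y] by (simp add: cstar_cstar)

lemma pi_Us: "0 \<le> x \<Longrightarrow> \<pi> a (Us x h) = Us x (\<pi> (\<alpha> x a) h)"
proof -
  assume x: "0 \<le> x"
  note S = star_endo_simps[OF endo[OF x]]
  show ?thesis
  proof (rule cinner_ext)
    fix k
    have "cinner k (\<pi> a (Us x h)) = cinner (\<pi> (cstar a) k) (Us x h)" by (rule rep_adj'[symmetric])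
    also have "\<dots> = cinner (U x (\<pi> (cstar a) k)) h" by (rule U_adj[OF x, symmetric])
    also have "U x (\<pi> (cstar a) k) = \<pi> (cstar (\<alpha> x a)) (U x k)" using U_pi[OF x] S(4) by simp
    also have "cinner (\<pi> (cstar (\<alpha> x a)) (U x k)) h = cinner (U x k) (\<pi> (\<alpha> x a) h)" by (rule rep_adj')
    also have "\<dots> = cinner k (Us x (\<pi> (\<alpha> x a) h))" by (rule U_adj[OF x])
    finally show "cinner k (\<pi> a (Us x h)) = cinner k (Us x (\<pi> (\<alpha> x a) h))" .
  qed
qed

lemma pi_contr: "norm (\<pi> a h) \<le> norm a * norm h"
  by (rule rep_contr[OF rep one])

lemma alpha_contr: "0 \<le> x \<Longrightarrow> norm (\<alpha> x a) \<le> norm a"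
  by (rule star_endo_contr[OF endo])

lemma L_contr: "0 \<le> x \<Longrightarrow> norm (L x a) \<le> norm a"
  by (rule tp_contr[OF tpx])

lemma U_contr: "0 \<le> x \<Longrightarrow> norm (U x h) \<le> norm h"
proof -
  assume x: "0 \<le> x"
  have "(norm (U x h))\<^sup>2 = Re (cinner (U x h) (U x h))" by (simp add: Re_cinner_self)
  also have "cinner (U x h) (U x h) = cinner h (Us x (U x h))" by (rule U_adj[OF x])
  also have "Us x (U x h) = \<pi> (L x 1) h" by (rule UsU[OF x])
  also have "Re (cinner h (\<pi> (L x 1) h)) \<le> norm h * norm (\<pi> (L x 1) h)" by (rule Re_cinner_le)
  also have "\<dots> \<le> norm h * (norm (L x 1) * norm h)" by (intro mult_left_mono pi_contr) simp
  also have "\<dots> \<le> norm h * (1 * norm h)"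
    using L_contr[OF x, of 1] by (intro mult_left_mono mult_right_mono) auto
  finally have "(norm (U x h))\<^sup>2 \<le> (norm h)\<^sup>2" by (simp add: power2_eq_square)
  then show ?thesis by (rule power2_le_imp_le) simp
qed

lemma Us_contr: "0 \<le> x \<Longrightarrow> norm (Us x h) \<le> norm h"
proof -
  assume x: "0 \<le> x"
  have "(norm (Us x h))\<^sup>2 = Re (cinner (Us x h) (Us x h))" by (simp add: Re_cinner_self)
  also have "cinner (Us x h) (Us x h) = cinner (U x (Us x h)) h" by (rule U_adj[OF x, symmetric])
  also have "U x (Us x h) = \<pi> (\<alpha> x 1) h" by (rule UUs[OF x])
  also have "Re (cinner (\<pi> (\<alpha> x 1) h) h) \<le> norm (\<pi> (\<alpha> x 1) h) * norm h" by (rule Re_cinner_le)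
  also have "\<dots> \<le> (norm (\<alpha> x 1) * norm h) * norm h" by (intro mult_right_mono pi_contr) simp
  also have "\<dots> \<le> (1 * norm h) * norm h"
    using alpha_contr[OF x, of 1] by (intro mult_left_mono mult_right_mono) auto
  finally have "(norm (Us x h))\<^sup>2 \<le> (norm h)\<^sup>2" by (simp add: power2_eq_square)
  then show ?thesis by (rule power2_le_imp_le) simp
qed

end

context csys
begin

definition Wop :: "'g \<Rightarrow> 'a \<Rightarrow> 'h \<Rightarrow> 'h" where
  "Wop g c h = (if 0 \<le> g then \<pi> c (U g h) else Us (- g) (\<pi> c h))"

lemma Wop_nonneg: "0 \<le> g \<Longrightarrow> Wop g c h = \<pi> c (U g h)"
  unfolding Wop_def by simp

lemma Wop_nonpos: "g \<le> 0 \<Longrightarrow> Wop g c h = Us (- g) (\<pi> c h)"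
  unfolding Wop_def by (cases "g = 0") (auto simp: U0 adj_id)

definition l1c :: "('g \<Rightarrow> 'a) \<Rightarrow> bool" where
  "l1c f \<longleftrightarrow> (\<forall>x. 0 \<le> x \<longrightarrow> f x * \<alpha> x 1 = f x \<and> \<alpha> x 1 * f (- x) = f (- x))"

lemma l1c_pos: "l1c f \<Longrightarrow> 0 \<le> x \<Longrightarrow> f x * \<alpha> x 1 = f x"
  unfolding l1c_def by blast

lemma l1c_neg: "l1c f \<Longrightarrow> 0 \<le> x \<Longrightarrow> \<alpha> x 1 * f (- x) = f (- x)"
  unfolding l1c_def by blast

lemma alpha_one_idem: "0 \<le> x \<Longrightarrow> \<alpha> x 1 * \<alpha> x 1 = \<alpha> x 1"
  by (rule tp_proj(2)[OF tpx])

lemma l1_set_l1c: "f \<in> l1_set \<alpha> \<Longrightarrow> l1c f"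
proof -
  assume f: "f \<in> l1_set \<alpha>"
  show "l1c f" unfolding l1c_def
  proof (intro allI impI conjI)
    fix x :: 'g assume x: "0 \<le> x"
    from f x obtain b where b: "f x = b * \<alpha> x 1" unfolding l1_set_def by blast
    show "f x * \<alpha> x 1 = f x" unfolding b using alpha_one_idem[OF x] by (simp add: mult.assoc)
    from f x obtain b' where b': "f (- x) = \<alpha> x 1 * b'" unfolding l1_set_def by blast
    show "\<alpha> x 1 * f (- x) = f (- x)" unfolding b' using alpha_one_idem[OF x]
      by (simp add: mult.assoc[symmetric])
  qed
qed

definition mm :: "('g \<Rightarrow> 'a) \<Rightarrow> ('g \<Rightarrow> 'a) \<Rightarrow> 'g \<Rightarrow> 'g \<Rightarrow> 'a" where
  "mm a b x y = (if 0 \<le> x \<and> 0 \<le> y then a x * \<alpha> x (b y)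
     else if x \<le> 0 \<and> y \<le> 0 then \<alpha> (- y) (a x) * b y
     else if 0 < x then (if 0 \<le> x + y then a x * \<alpha> (x + y) (b y) else \<alpha> (- (x + y)) (a x) * b y)
     else (if 0 \<le> x + y then L (- x) (a x * b y) else L y (a x * b y)))"

lemma mm_pp: "0 \<le> x \<Longrightarrow> 0 \<le> y \<Longrightarrow> mm a b x y = a x * \<alpha> x (b y)"
  unfolding mm_def by simp

lemma mm_nn: "x \<le> 0 \<Longrightarrow> y \<le> 0 \<Longrightarrow> \<not> (0 \<le> x \<and> 0 \<le> y) \<Longrightarrow> mm a b x y = \<alpha> (- y) (a x) * b y"
  unfolding mm_def by (simp only: if_False if_True simp_thms)

lemma mm_pn1: "0 < x \<Longrightarrow> y < 0 \<Longrightarrow> 0 \<le> x + y \<Longrightarrow> mm a b x y = a x * \<alpha> (x + y) (b y)"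
proof -
  assume h: "0 < x" "y < 0" "0 \<le> x + y"
  then have "\<not> (0 \<le> x \<and> 0 \<le> y)" "\<not> (x \<le> 0 \<and> y \<le> 0)" by auto
  then show ?thesis unfolding mm_def using h by (simp only: if_False if_True simp_thms)
qed

lemma mm_pn2: "0 < x \<Longrightarrow> y < 0 \<Longrightarrow> \<not> 0 \<le> x + y \<Longrightarrow> mm a b x y = \<alpha> (- (x + y)) (a x) * b y"
proof -
  assume h: "0 < x" "y < 0" "\<not> 0 \<le> x + y"
  then have "\<not> (0 \<le> x \<and> 0 \<le> y)" "\<not> (x \<le> 0 \<and> y \<le> 0)" by auto
  then show ?thesis unfolding mm_def using h by (simp only: if_False if_True simp_thms)
qed

lemma mm_np1: "x < 0 \<Longrightarrow> 0 < y \<Longrightarrow> 0 \<le> x + y \<Longrightarrow> mm a b x y = L (- x) (a x * b y)"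
proof -
  assume h: "x < 0" "0 < y" "0 \<le> x + y"
  then have "\<not> (0 \<le> x \<and> 0 \<le> y)" "\<not> (x \<le> 0 \<and> y \<le> 0)" "\<not> 0 < x" by auto
  then show ?thesis unfolding mm_def using h by (simp only: if_False if_True simp_thms)
qed

lemma mm_np2: "x < 0 \<Longrightarrow> 0 < y \<Longrightarrow> \<not> 0 \<le> x + y \<Longrightarrow> mm a b x y = L y (a x * b y)"
proof -
  assume h: "x < 0" "0 < y" "\<not> 0 \<le> x + y"
  then have "\<not> (0 \<le> x \<and> 0 \<le> y)" "\<not> (x \<le> 0 \<and> y \<le> 0)" "\<not> 0 < x" by auto
  then show ?thesis unfolding mm_def using h by (simp only: if_False if_True simp_thms)
qed

lemma pi_mult: "\<pi> a (\<pi> b h) = \<pi> (a * b) h"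
  by (rule is_repD(4)[OF rep, symmetric])

lemma U_split: "0 \<le> p \<Longrightarrow> 0 \<le> q \<Longrightarrow> U (p + q) h = U p (U q h)"
  by (rule Uadd_apply)

lemma block:
  assumes a: "l1c a" and b: "l1c b"
  shows "Wop x (a x) (Wop y (b y) h) = Wop (x + y) (mm a b x y) h"
proof (cases "0 \<le> x \<and> 0 \<le> y")
  case True
  then have x: "0 \<le> x" and y: "0 \<le> y" by auto
  have "Wop x (a x) (Wop y (b y) h) = \<pi> (a x) (U x (\<pi> (b y) (U y h)))"
    using x y by (simp add: Wop_nonneg)
  also have "\<dots> = \<pi> (a x * \<alpha> x (b y)) (U (x + y) h)"
    using x y by (simp add: U_pi pi_mult U_split)
  also have "\<dots> = Wop (x + y) (mm a b x y) h"
    using x y by (simp add: Wop_nonneg mm_def)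
  finally show ?thesis .
next
  case nC1: False
  show ?thesis
  proof (cases "x \<le> 0 \<and> y \<le> 0")
    case True
    then have x: "0 \<le> - x" and y: "0 \<le> - y" by auto
    have xy: "x + y \<le> 0" using True by (auto intro: add_nonpos_nonpos)
    have "Wop x (a x) (Wop y (b y) h) = Us (- x) (\<pi> (a x) (Us (- y) (\<pi> (b y) h)))"
      using True by (simp add: Wop_nonpos)
    also have "\<pi> (a x) (Us (- y) (\<pi> (b y) h)) = Us (- y) (\<pi> (\<alpha> (- y) (a x) * b y) h)"
      using y by (simp add: pi_Us pi_mult)
    also have "Us (- x) (Us (- y) (\<pi> (\<alpha> (- y) (a x) * b y) h)) = Us (- (x + y)) (\<pi> (\<alpha> (- y) (a x) * b y) h)"
      using Usadd_apply[OF y x, of "\<pi> (\<alpha> (- y) (a x) * b y) h"] by (simp add: add.commute)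
    also have "\<dots> = Wop (x + y) (mm a b x y) h"
      using xy True nC1 by (simp add: Wop_nonpos[OF xy] mm_nn)
    finally show ?thesis .
  next
    case nC2: False
    show ?thesis
    proof (cases "0 < x")
      case xp: True
      then have yn: "y < 0" using nC1 nC2 by auto
      define y' where "y' = - y"
      have y': "0 < y'" "b y = b (- y')" unfolding y'_def using yn by auto
      have lhs: "Wop x (a x) (Wop y (b y) h) = \<pi> (a x) (U x (Us y' (\<pi> (b y) h)))"
        using xp yn unfolding y'_def by (simp add: Wop_nonneg Wop_nonpos)
      have by': "\<alpha> y' 1 * b y = b y" using l1c_neg[OF b, of y'] y' by simp
      show ?thesis
      proof (cases "0 \<le> x + y")
        case True
        have e1: "x - y' = x + y" unfolding y'_def by simp
        have xy: "0 \<le> x - y'" using True unfolding e1 .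
        have "U x (Us y' (\<pi> (b y) h)) = U (x - y') (U y' (Us y' (\<pi> (b y) h)))"
          using U_split[OF xy less_imp_le[OF y'(1)]] by simp
        also have "U y' (Us y' (\<pi> (b y) h)) = \<pi> (\<alpha> y' 1 * b y) h"
          using y' by (simp add: UUs pi_mult)
        also have "\<alpha> y' 1 * b y = b y" by (rule by')
        finally have "\<pi> (a x) (U x (Us y' (\<pi> (b y) h))) = \<pi> (a x * \<alpha> (x - y') (b y)) (U (x - y') h)"
          using xy by (simp add: U_pi pi_mult)
        then have "\<pi> (a x) (U x (Us y' (\<pi> (b y) h))) = \<pi> (a x * \<alpha> (x + y) (b y)) (U (x + y) h)"
          unfolding e1 .
        then show ?thesis using lhs by (simp only: Wop_nonneg[OF True] mm_pn1[OF xp yn True])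
      next
        case False
        have lt: "x + y < 0" using False by (rule not_le_imp_less)
        then have nxy: "x + y \<le> 0" by (rule less_imp_le)
        have e1: "y' - x = - (x + y)" unfolding y'_def by (simp add: algebra_simps)
        have xy: "0 \<le> y' - x" unfolding e1 using nxy by (simp only: neg_0_le_iff_le)
        have "Us y' (\<pi> (b y) h) = Us x (Us (y' - x) (\<pi> (b y) h))"
          using Usadd_apply[OF xy less_imp_le[OF xp]] by simp
        then have "U x (Us y' (\<pi> (b y) h)) = \<pi> (\<alpha> x 1) (Us (y' - x) (\<pi> (b y) h))"
          using xp by (simp add: UUs)
        then have "\<pi> (a x) (U x (Us y' (\<pi> (b y) h))) = \<pi> (a x * \<alpha> x 1) (Us (y' - x) (\<pi> (b y) h))"
          by (simp add: pi_mult)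
        also have "a x * \<alpha> x 1 = a x" using l1c_pos[OF a] xp by simp
        also have "\<pi> (a x) (Us (y' - x) (\<pi> (b y) h)) = Us (y' - x) (\<pi> (\<alpha> (y' - x) (a x) * b y) h)"
          using xy by (simp add: pi_Us pi_mult)
        finally have "\<pi> (a x) (U x (Us y' (\<pi> (b y) h))) = Us (- (x + y)) (\<pi> (\<alpha> (- (x + y)) (a x) * b y) h)"
          unfolding e1 .
        then show ?thesis using lhs by (simp only: Wop_nonpos[OF nxy] mm_pn2[OF xp yn False])
      qed
    next
      case xn: False
      then have xn': "x < 0" and yp: "0 < y" using nC1 nC2 by auto
      define x' where "x' = - x"
      have x': "0 < x'" unfolding x'_def using xn' by auto
      have lhs: "Wop x (a x) (Wop y (b y) h) = Us x' (\<pi> (a x * b y) (U y h))"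
        using xn' yp unfolding x'_def by (simp add: Wop_nonneg Wop_nonpos pi_mult)
      show ?thesis
      proof (cases "0 \<le> x + y")
        case True
        have e1: "y - x' = x + y" unfolding x'_def by (simp add: algebra_simps)
        have xy: "0 \<le> y - x'" unfolding e1 by (rule True)
        have "U y h = U (x' + (y - x')) h" by simp
        also have "\<dots> = U x' (U (y - x') h)" using U_split[OF less_imp_le[OF x'] xy] by simp
        finally have "Us x' (\<pi> (a x * b y) (U y h)) = \<pi> (L x' (a x * b y)) (U (y - x') h)"
          using x' by (simp add: cov2)
        then have "Us x' (\<pi> (a x * b y) (U y h)) = \<pi> (L (- x) (a x * b y)) (U (x + y) h)"
          unfolding e1 unfolding x'_def .
        then show ?thesis using lhs by (simp only: Wop_nonneg[OF True] mm_np1[OF xn' yp True])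
      next
        case False
        have lt: "x + y < 0" using False by (rule not_le_imp_less)
        then have nxy: "x + y \<le> 0" by (rule less_imp_le)
        have e1: "x' - y = - (x + y)" unfolding x'_def by (simp add: algebra_simps)
        have xy: "0 \<le> x' - y" unfolding e1 using nxy by (simp only: neg_0_le_iff_le)
        have "Us x' v = Us (x' - y) (Us y v)" for v
        proof -
          have "Us x' v = Us (y + (x' - y)) v" by simp
          also have "\<dots> = Us (x' - y) (Us y v)" by (rule Usadd_apply[OF less_imp_le[OF yp] xy])
          finally show ?thesis .
        qed
        then have "Us x' (\<pi> (a x * b y) (U y h)) = Us (x' - y) (Us y (\<pi> (a x * b y) (U y h)))" .
        also have "Us y (\<pi> (a x * b y) (U y h)) = \<pi> (L y (a x * b y)) h"
          using yp by (simp add: cov2)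
        finally have "Us x' (\<pi> (a x * b y) (U y h)) = Us (- (x + y)) (\<pi> (L y (a x * b y)) h)"
          unfolding e1 .
        then show ?thesis using lhs by (simp only: Wop_nonpos[OF nxy] mm_np2[OF xn' yp False])
      qed
    qed
  qed
qed

lemma mm_norm:
  shows "norm (mm a b x y) \<le> norm (a x) * norm (b y)"
proof -
  have ma: "norm (c * \<alpha> z d) \<le> norm c * norm d" if "0 \<le> z" for c d z
    using norm_mult_ineq[of c "\<alpha> z d"] alpha_contr[OF that, of d]
    by (meson mult_left_mono norm_ge_zero order_trans)
  have am: "norm (\<alpha> z c * d) \<le> norm c * norm d" if "0 \<le> z" for c d z
    using norm_mult_ineq[of "\<alpha> z c" d] alpha_contr[OF that, of c]
    by (meson mult_right_mono norm_ge_zero order_trans)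
  have lm: "norm (L z (c * d)) \<le> norm c * norm d" if "0 \<le> z" for c d z
    using L_contr[OF that, of "c * d"] norm_mult_ineq[of c d] by linarith
  have g1: "\<not> 0 \<le> z \<Longrightarrow> 0 \<le> - z" for z :: 'g
    using not_le_imp_less[of 0 z] by (simp only: neg_0_le_iff_le less_imp_le)
  have g2: "z \<le> 0 \<Longrightarrow> 0 \<le> - z" for z :: 'g by (simp only: neg_0_le_iff_le)
  have g3: "z < 0 \<Longrightarrow> 0 \<le> - z" for z :: 'g by (simp only: neg_0_le_iff_le less_imp_le)
  consider "0 \<le> x \<and> 0 \<le> y" | "\<not> (0 \<le> x \<and> 0 \<le> y)" "x \<le> 0 \<and> y \<le> 0"
    | "\<not> (0 \<le> x \<and> 0 \<le> y)" "\<not> (x \<le> 0 \<and> y \<le> 0)" "0 < x" "0 \<le> x + y"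
    | "\<not> (0 \<le> x \<and> 0 \<le> y)" "\<not> (x \<le> 0 \<and> y \<le> 0)" "0 < x" "\<not> 0 \<le> x + y"
    | "\<not> (0 \<le> x \<and> 0 \<le> y)" "\<not> (x \<le> 0 \<and> y \<le> 0)" "\<not> 0 < x" "0 \<le> x + y"
    | "\<not> (0 \<le> x \<and> 0 \<le> y)" "\<not> (x \<le> 0 \<and> y \<le> 0)" "\<not> 0 < x" "\<not> 0 \<le> x + y"
    by blast
  then show ?thesis
  proof cases
    case 1 then show ?thesis unfolding mm_def by (simp add: ma)
  next
    case 2 then show ?thesis unfolding mm_def by (simp only: if_True if_False simp_thms) (rule am, rule g2, blast)
  next
    case 3 then show ?thesis unfolding mm_def by (simp only: if_True if_False simp_thms) (rule ma, blast)
  next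
    case 4 then show ?thesis unfolding mm_def by (simp only: if_True if_False simp_thms) (rule am, rule g1, blast)
  next
    case 5
    then have "x < 0" by auto
    with 5 show ?thesis unfolding mm_def by (simp only: if_True if_False simp_thms) (rule lm, rule g3)
  next
    case 6
    then have "0 < y" by auto
    with 6 show ?thesis unfolding mm_def by (simp only: if_True if_False simp_thms) (rule lm, rule less_imp_le)
  qed
qed

end

lemma infsum_reindex_invol:
  assumes inv: "\<And>p. \<phi> (\<phi> p) = p"
    and ST: "\<And>p. p \<in> S \<Longrightarrow> \<phi> p \<in> T" and TS: "\<And>q. q \<in> T \<Longrightarrow> \<phi> q \<in> S"
    and eq: "\<And>p. p \<in> S \<Longrightarrow> M (\<phi> p) = F p"
  shows "infsum F S = infsum M T"
  by (rule infsum_reindex_bij_witness[where i=\<phi> and j=\<phi>]) (use assms in auto)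

lemma summable_reindex_invol:
  assumes inv: "\<And>p. \<phi> (\<phi> p) = p"
    and ST: "\<And>p. p \<in> S \<Longrightarrow> \<phi> p \<in> T" and TS: "\<And>q. q \<in> T \<Longrightarrow> \<phi> q \<in> S"
    and eq: "\<And>p. p \<in> S \<Longrightarrow> M (\<phi> p) = F p"
  shows "F summable_on S \<longleftrightarrow> M summable_on T"
  by (rule summable_on_reindex_bij_witness[where i=\<phi> and j=\<phi>]) (use assms in auto)

lemma abs_summable_on_comparison':
  fixes f :: "'x \<Rightarrow> 'b::banach"
  assumes "g summable_on A" "\<And>x. x \<in> A \<Longrightarrow> norm (f x) \<le> g x"
  shows "f summable_on A" "(\<lambda>x. norm (f x)) summable_on A"
proof -
  have g0: "\<And>x. x \<in> A \<Longrightarrow> 0 \<le> g x" using assms(2) norm_ge_zero order_trans by blast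
  show n: "(\<lambda>x. norm (f x)) summable_on A"
    by (rule summable_on_comparison_test[OF assms(1)]) (use assms(2) in auto)
  show "f summable_on A" by (rule abs_summable_summable[OF n])
qed

context csys
begin

lemma Wop_norm: "norm (Wop g c h) \<le> norm c * norm h"
proof (cases "0 \<le> g")
  case True
  have "norm (Wop g c h) = norm (\<pi> c (U g h))" using True by (simp add: Wop_nonneg)
  also have "\<dots> \<le> norm c * norm (U g h)" by (rule pi_contr)
  also have "\<dots> \<le> norm c * norm h" using U_contr[OF True] by (simp add: mult_left_mono)
  finally show ?thesis .
next
  case False
  then have g: "0 \<le> - g" using not_le_imp_less[of 0 g] by (simp only: neg_0_le_iff_le less_imp_le)
  have "norm (Wop g c h) = norm (Us (- g) (\<pi> c h))" using False by (simp add: Wop_def)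
  also have "\<dots> \<le> norm (\<pi> c h)" by (rule Us_contr[OF g])
  also have "\<dots> \<le> norm c * norm h" by (rule pi_contr)
  finally show ?thesis .
qed

lemma Wop_bounded_op: "bounded_op (Wop g c)"
proof -
  have add: "Wop g c (h + k) = Wop g c h + Wop g c k" for h k
    unfolding Wop_def
    by (simp add: bounded_opD(1)[OF Ub] bounded_opD(1)[OF is_repD(1)[OF rep]] bounded_opD(1)[OF Usb])
  have sc: "Wop g c (scaleC z h) = scaleC z (Wop g c h)" for z h
    unfolding Wop_def
    by (simp add: bounded_opD(2)[OF Ub] bounded_opD(2)[OF is_repD(1)[OF rep]] bounded_opD(2)[OF Usb])
  have "norm (Wop g c h) \<le> norm c * norm h" for h by (rule Wop_norm)
  then show ?thesis unfolding bounded_op_def using add sc by blast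
qed

lemma Wop_bl: "bounded_linear (Wop g c)"
  by (rule bounded_op_bounded_linear[OF Wop_bounded_op])

lemma Wop_bl_c: "bounded_linear (\<lambda>c. Wop g c h)"
proof (rule bounded_linear_intro[where K="norm h"])
  show "Wop g (a + b) h = Wop g a h + Wop g b h" for a b
  proof (cases "0 \<le> g")
    case True then show ?thesis by (simp add: Wop_nonneg is_repD(2)[OF rep])
  next
    case False
    then have g: "0 \<le> - g" using not_le_imp_less[of 0 g] by (simp only: neg_0_le_iff_le less_imp_le)
    show ?thesis using False by (simp add: Wop_def is_repD(2)[OF rep] bounded_opD(1)[OF Usb[OF g]])
  qed
  show "Wop g (scaleR r a) h = scaleR r (Wop g a h)" for r a
  proof (cases "0 \<le> g")
    case True then show ?thesis by (simp add: Wop_nonneg rep_lin(4)[OF rep])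
  next
    case False
    then have g: "0 \<le> - g" using not_le_imp_less[of 0 g] by (simp only: neg_0_le_iff_le less_imp_le)
    show ?thesis using False by (simp add: Wop_def rep_lin(4)[OF rep] bounded_op_linear_simps(4)[OF Usb[OF g]])
  qed
  show "norm (Wop g a h) \<le> norm a * norm h" for a by (rule Wop_norm)
qed

definition abs1 :: "('g \<Rightarrow> 'a) \<Rightarrow> bool" where
  "abs1 f \<longleftrightarrow> (\<lambda>g. norm (f g)) summable_on UNIV"

definition RHO :: "('g \<Rightarrow> 'a) \<Rightarrow> 'h \<Rightarrow> 'h" where
  "RHO f h = infsum (\<lambda>g. Wop g (f g) h) UNIV"

lemma abs1_summable_on: "abs1 f \<Longrightarrow> (\<lambda>g. norm (f g)) summable_on A"
  unfolding abs1_def using summable_on_subset_banach by blast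

lemma Wop_summable:
  assumes "abs1 f"
  shows "(\<lambda>g. Wop g (f g) h) summable_on A" "(\<lambda>g. norm (Wop g (f g) h)) summable_on A"
proof -
  have s: "(\<lambda>g. norm (f g) * norm h) summable_on A"
    by (rule summable_on_cmult_left[OF abs1_summable_on[OF assms]])
  show "(\<lambda>g. Wop g (f g) h) summable_on A" "(\<lambda>g. norm (Wop g (f g) h)) summable_on A"
    using abs_summable_on_comparison'[OF s Wop_norm] by auto
qed

lemma integrated_form_RHO:
  assumes f: "abs1 f"
  shows "integrated_form \<pi> U f h = RHO f h"
proof -
  let ?F = "\<lambda>g. Wop g (f g) h"
  have U3: "(UNIV :: 'g set) = ({g. g < 0} \<union> {0}) \<union> {g. 0 < g}" by auto
  have "RHO f h = infsum ?F ({g. g < 0} \<union> {0}) + infsum ?F {g. 0 < g}"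
    unfolding RHO_def U3 by (rule infsum_Un_disjoint) (auto intro: Wop_summable[OF f])
  also have "infsum ?F ({g. g < 0} \<union> {0}) = infsum ?F {g. g < 0} + infsum ?F {0}"
    by (rule infsum_Un_disjoint) (auto intro: Wop_summable[OF f])
  also have "infsum ?F {0} = \<pi> (f 0) h" by (simp add: Wop_nonneg U0)
  also have "infsum ?F {g. 0 < g} = infsum (\<lambda>x. \<pi> (f x) (U x h)) {x. 0 < x}"
    by (rule infsum_cong) (simp add: Wop_nonneg)
  also have "infsum ?F {g. g < 0} = infsum (\<lambda>x. Us x (\<pi> (f (- x)) h)) {x. 0 < x}"
  proof (rule infsum_reindex_invol[where \<phi>=uminus])
    show "- (- p) = p" for p :: 'g by simp
    show "p \<in> {g. g < 0} \<Longrightarrow> - p \<in> {x. 0 < x}" for p :: 'g by simp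
    show "q \<in> {x. 0 < x} \<Longrightarrow> - q \<in> {g. g < 0}" for q :: 'g by simp
    show "p \<in> {g. g < 0} \<Longrightarrow> Us (- p) (\<pi> (f (- (- p))) h) = Wop p (f p) h" for p :: 'g
      by (subst Wop_nonpos) (simp_all add: less_imp_le)
  qed
  finally show ?thesis unfolding integrated_form_def by simp
qed

lemma integrated_form_summable:
  assumes f: "abs1 f"
  shows "(\<lambda>x. Us x (\<pi> (f (- x)) h)) summable_on {x. 0 < x}" "(\<lambda>x. \<pi> (f x) (U x h)) summable_on {x. 0 < x}"
proof -
  have "(\<lambda>g. Wop g (f g) h) summable_on {g. g < 0}" by (rule Wop_summable[OF f])
  moreover have "((\<lambda>g. Wop g (f g) h) summable_on {g. g < 0}) \<longleftrightarrow> ((\<lambda>x. Us x (\<pi> (f (- x)) h)) summable_on {x. 0 < x})"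
  proof (rule summable_reindex_invol[where \<phi>=uminus])
    show "- (- p) = p" for p :: 'g by simp
    show "p \<in> {g. g < 0} \<Longrightarrow> - p \<in> {x. 0 < x}" for p :: 'g by simp
    show "q \<in> {x. 0 < x} \<Longrightarrow> - q \<in> {g. g < 0}" for q :: 'g by simp
    show "p \<in> {g. g < 0} \<Longrightarrow> Us (- p) (\<pi> (f (- (- p))) h) = Wop p (f p) h" for p :: 'g
      by (subst Wop_nonpos) (simp_all add: less_imp_le)
  qed
  ultimately show "(\<lambda>x. Us x (\<pi> (f (- x)) h)) summable_on {x. 0 < x}" by blast
  have "(\<lambda>g. Wop g (f g) h) summable_on {g. 0 < g}" by (rule Wop_summable[OF f])
  then show "(\<lambda>x. \<pi> (f x) (U x h)) summable_on {x. 0 < x}"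
    by (rule summable_on_cong[THEN iffD1, rotated]) (simp add: Wop_nonneg)
qed

end

context csys
begin

lemma prod_summable:
  assumes a: "abs1 a" and b: "abs1 b"
  shows "(\<lambda>p. norm (a (fst p)) * norm (b (snd p))) summable_on UNIV"
proof -
  define S where "S = infsum (\<lambda>y. norm (b y)) UNIV"
  have "(\<lambda>(x, y). norm (a x) * norm (b y)) summable_on Sigma UNIV (\<lambda>_. UNIV)"
  proof (rule summable_on_SigmaI[where g="\<lambda>x. norm (a x) * S"])
    show "((\<lambda>y. case (x, y) of (x, y) \<Rightarrow> norm (a x) * norm (b y)) has_sum norm (a x) * S) UNIV" for x
      unfolding S_def using has_sum_cmult_right[OF has_sum_infsum[OF b[unfolded abs1_def]], of "norm (a x)"]
      by simp
    show "(\<lambda>x. norm (a x) * S) summable_on UNIV"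
      by (rule summable_on_cmult_left[OF a[unfolded abs1_def]])
    show "0 \<le> (case (x, y) of (x, y) \<Rightarrow> norm (a x) * norm (b y))" for x y by simp
  qed
  then show ?thesis by (simp add: case_prod_beta')
qed

abbreviation M where "M a b p \<equiv> mm a b (fst p) (snd p)"

lemma mm_summable:
  assumes a: "abs1 a" and b: "abs1 b"
  shows "M a b summable_on A" "(\<lambda>p. norm (M a b p)) summable_on A"
proof -
  have s: "(\<lambda>p. norm (a (fst p)) * norm (b (snd p))) summable_on A"
    by (rule summable_on_subset_banach[OF prod_summable[OF a b]]) simp
  have le: "\<And>p. p \<in> A \<Longrightarrow> norm (M a b p) \<le> norm (a (fst p)) * norm (b (snd p))"
    by (rule mm_norm)
  show "M a b summable_on A" "(\<lambda>p. norm (M a b p)) summable_on A"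
    using abs_summable_on_comparison'[OF s le] by auto
qed

definition fib :: "'g \<Rightarrow> ('g \<times> 'g) set" where
  "fib g = {p. fst p + snd p = g}"

lemma sign_cases_nonneg:
  fixes x y :: 'g
  assumes "0 \<le> x + y"
  shows "(0 < x \<and> y < 0) \<or> (x < 0 \<and> 0 < y) \<or> (0 \<le> x \<and> 0 \<le> y)"
proof (cases x "0::'g" rule: linorder_cases)
  case less
  show ?thesis
  proof (cases y "0::'g" rule: linorder_cases)
    case less
    have "x + y < 0" using \<open>x < 0\<close> \<open>y < 0\<close> by (rule add_neg_neg)
    then show ?thesis using assms by (simp add: less_imp_le)
  next
    case equal
    then show ?thesis using assms \<open>x < 0\<close> by (simp add: less_imp_le)
  next
    case greater
    then show ?thesis using \<open>x < 0\<close> by (simp add: less_imp_le)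
  qed
next
  case equal
  then show ?thesis using assms by (simp add: less_imp_le)
next
  case greater
  show ?thesis
  proof (cases y "0::'g" rule: linorder_cases)
    case less then show ?thesis using greater by (simp add: less_imp_le)
  next
    case equal then show ?thesis using greater by (simp add: less_imp_le)
  next
    case g2: greater then show ?thesis using greater by (simp add: less_imp_le)
  qed
qed

lemma sign_cases_neg:
  fixes x y :: 'g
  assumes "x + y < 0"
  shows "(0 < x \<and> y < 0) \<or> (x < 0 \<and> 0 < y) \<or> (x \<le> 0 \<and> y \<le> 0)"
proof (cases x "0::'g" rule: linorder_cases)
  case less
  show ?thesis
  proof (cases y "0::'g" rule: linorder_cases)
    case greater then show ?thesis using less by (simp add: less_imp_le)
  qed (use less in auto)
next
  case equal
  then show ?thesis using assms by (simp add: less_imp_le)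
next
  case greater
  show ?thesis
  proof (cases y "0::'g" rule: linorder_cases)
    case less then show ?thesis using greater by (simp add: less_imp_le)
  next
    case equal then show ?thesis using greater assms by (simp add: less_imp_le)
  next
    case g2: greater
    have "0 < x + y" using greater g2 by (rule add_pos_pos)
    then show ?thesis using assms by (simp add: less_imp_le)
  qed
qed

lemma fib_split_nonneg:
  assumes "0 \<le> g"
  shows "fib g = ({p \<in> fib g. 0 < fst p \<and> snd p < 0} \<union> {p \<in> fib g. fst p < 0 \<and> 0 < snd p})
               \<union> {p \<in> fib g. 0 \<le> fst p \<and> 0 \<le> snd p}"
proof (intro equalityI subsetI)
  fix p assume p: "p \<in> fib g"
  obtain x y where xy: "p = (x, y)" by fastforce
  have s: "x + y = g" using p xy unfolding fib_def by simp
  have "(0 < x \<and> y < 0) \<or> (x < 0 \<and> 0 < y) \<or> (0 \<le> x \<and> 0 \<le> y)"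
    using sign_cases_nonneg[of x y] s assms by simp
  then show "p \<in> ({p \<in> fib g. 0 < fst p \<and> snd p < 0} \<union> {p \<in> fib g. fst p < 0 \<and> 0 < snd p})
               \<union> {p \<in> fib g. 0 \<le> fst p \<and> 0 \<le> snd p}" using p xy by auto
qed auto

lemma fib_split_neg:
  assumes "g < 0"
  shows "fib g = ({p \<in> fib g. 0 < fst p \<and> snd p < 0} \<union> {p \<in> fib g. fst p < 0 \<and> 0 < snd p})
               \<union> {p \<in> fib g. fst p \<le> 0 \<and> snd p \<le> 0}"
proof (intro equalityI subsetI)
  fix p assume p: "p \<in> fib g"
  obtain x y where xy: "p = (x, y)" by fastforce
  have s: "x + y = g" using p xy unfolding fib_def by simp
  have "(0 < x \<and> y < 0) \<or> (x < 0 \<and> 0 < y) \<or> (x \<le> 0 \<and> y \<le> 0)"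
    using sign_cases_neg[of x y] s assms by simp
  then show "p \<in> ({p \<in> fib g. 0 < fst p \<and> snd p < 0} \<union> {p \<in> fib g. fst p < 0 \<and> 0 < snd p})
               \<union> {p \<in> fib g. fst p \<le> 0 \<and> snd p \<le> 0}" using p xy by auto
qed auto

lemma infsum_split3:
  fixes f :: "'x \<Rightarrow> 'b::banach"
  assumes "f summable_on UNIV" "A \<inter> B = {}" "(A \<union> B) \<inter> C = {}"
  shows "infsum f ((A \<union> B) \<union> C) = infsum f A + infsum f B + infsum f C"
proof -
  have s: "f summable_on X" for X by (rule summable_on_subset_banach[OF assms(1)]) simp
  have "infsum f ((A \<union> B) \<union> C) = infsum f (A \<union> B) + infsum f C"
    by (rule infsum_Un_disjoint[OF s s assms(3)])
  also have "infsum f (A \<union> B) = infsum f A + infsum f B"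
    by (rule infsum_Un_disjoint[OF s s assms(2)])
  finally show ?thesis .
qed

lemma l1_mult_fib:
  assumes a: "abs1 a" and b: "abs1 b"
  shows "l1_mult \<alpha> L a b g = infsum (M a b) (fib g)"
proof (cases "0 \<le> g")
  case g: True
  have e1: "infsum (\<lambda>(x, y). a x * \<alpha> (x - y) (b (- y))) {(x, y). 0 < x \<and> 0 < y \<and> g = x - y}
      = infsum (M a b) {p \<in> fib g. 0 < fst p \<and> snd p < 0}"
  proof (rule infsum_reindex_invol[where \<phi>="\<lambda>p. (fst p, - snd p)"])
    fix p :: "'g \<times> 'g" assume p: "p \<in> {(x, y). 0 < x \<and> 0 < y \<and> g = x - y}"
    obtain x y where xy: "p = (x, y)" by fastforce
    have h: "0 < x" "0 < y" "g = x - y" using p xy by auto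
    show "(fst p, - snd p) \<in> {p \<in> fib g. 0 < fst p \<and> snd p < 0}" using h xy by (simp add: fib_def)
    have "0 \<le> x + - y" using h g by simp
    then show "M a b (fst p, - snd p) = (case p of (x, y) \<Rightarrow> a x * \<alpha> (x - y) (b (- y)))"
      using h xy by (simp add: mm_pn1)
  next
    fix q :: "'g \<times> 'g" assume "q \<in> {p \<in> fib g. 0 < fst p \<and> snd p < 0}"
    then show "(fst q, - snd q) \<in> {(x, y). 0 < x \<and> 0 < y \<and> g = x - y}" by (auto simp: fib_def)
  qed simp
  have e2: "infsum (\<lambda>(x, y). L x (a (- x) * b y)) {(x, y). 0 < x \<and> 0 < y \<and> g = y - x}
      = infsum (M a b) {p \<in> fib g. fst p < 0 \<and> 0 < snd p}"
  proof (rule infsum_reindex_invol[where \<phi>="\<lambda>p. (- fst p, snd p)"])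
    fix p :: "'g \<times> 'g" assume p: "p \<in> {(x, y). 0 < x \<and> 0 < y \<and> g = y - x}"
    obtain x y where xy: "p = (x, y)" by fastforce
    have h: "0 < x" "0 < y" "g = y - x" using p xy by auto
    show "(- fst p, snd p) \<in> {p \<in> fib g. fst p < 0 \<and> 0 < snd p}" using h xy by (simp add: fib_def)
    have "0 \<le> - x + y" using h g by simp
    then show "M a b (- fst p, snd p) = (case p of (x, y) \<Rightarrow> L x (a (- x) * b y))"
      using h xy by (simp add: mm_np1)
  next
    fix q :: "'g \<times> 'g" assume "q \<in> {p \<in> fib g. fst p < 0 \<and> 0 < snd p}"
    then show "(- fst q, snd q) \<in> {(x, y). 0 < x \<and> 0 < y \<and> g = y - x}" by (auto simp: fib_def)
  qed simp
  have e3: "infsum (\<lambda>(x, y). a x * \<alpha> x (b y)) {(x, y). 0 \<le> x \<and> 0 \<le> y \<and> g = x + y}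
      = infsum (M a b) {p \<in> fib g. 0 \<le> fst p \<and> 0 \<le> snd p}"
  proof (rule infsum_reindex_invol[where \<phi>="\<lambda>p. p"])
    fix p :: "'g \<times> 'g" assume p: "p \<in> {(x, y). 0 \<le> x \<and> 0 \<le> y \<and> g = x + y}"
    obtain x y where xy: "p = (x, y)" by fastforce
    have h: "0 \<le> x" "0 \<le> y" "g = x + y" using p xy by auto
    show "p \<in> {p \<in> fib g. 0 \<le> fst p \<and> 0 \<le> snd p}" using h xy by (simp add: fib_def)
    show "M a b p = (case p of (x, y) \<Rightarrow> a x * \<alpha> x (b y))"
      using h xy by (simp add: mm_pp)
  next
    fix q :: "'g \<times> 'g" assume "q \<in> {p \<in> fib g. 0 \<le> fst p \<and> 0 \<le> snd p}"
    then show "q \<in> {(x, y). 0 \<le> x \<and> 0 \<le> y \<and> g = x + y}" by (auto simp: fib_def)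
  qed simp
  have "infsum (M a b) (fib g) = infsum (M a b) {p \<in> fib g. 0 < fst p \<and> snd p < 0}
      + infsum (M a b) {p \<in> fib g. fst p < 0 \<and> 0 < snd p} + infsum (M a b) {p \<in> fib g. 0 \<le> fst p \<and> 0 \<le> snd p}"
    by (subst fib_split_nonneg[OF g], rule infsum_split3[OF mm_summable(1)[OF a b]]) auto
  then show ?thesis using g unfolding l1_mult_def by (simp add: e1 e2 e3)
next
  case g: False
  then have gn: "g < 0" by (rule not_le_imp_less)
  have e1: "infsum (\<lambda>(x, y). \<alpha> (y - x) (a x) * b (- y)) {(x, y). 0 < x \<and> 0 < y \<and> g = x - y}
      = infsum (M a b) {p \<in> fib g. 0 < fst p \<and> snd p < 0}"
  proof (rule infsum_reindex_invol[where \<phi>="\<lambda>p. (fst p, - snd p)"])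
    fix p :: "'g \<times> 'g" assume p: "p \<in> {(x, y). 0 < x \<and> 0 < y \<and> g = x - y}"
    obtain x y where xy: "p = (x, y)" by fastforce
    have h: "0 < x" "0 < y" "g = x - y" using p xy by auto
    show "(fst p, - snd p) \<in> {p \<in> fib g. 0 < fst p \<and> snd p < 0}" using h xy by (simp add: fib_def)
    have "\<not> 0 \<le> x + - y" using h g by simp
    then show "M a b (fst p, - snd p) = (case p of (x, y) \<Rightarrow> \<alpha> (y - x) (a x) * b (- y))"
      using h xy by (simp add: mm_pn2)
  next
    fix q :: "'g \<times> 'g" assume "q \<in> {p \<in> fib g. 0 < fst p \<and> snd p < 0}"
    then show "(fst q, - snd q) \<in> {(x, y). 0 < x \<and> 0 < y \<and> g = x - y}" by (auto simp: fib_def)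
  qed simp
  have e2: "infsum (\<lambda>(x, y). L y (a (- x) * b y)) {(x, y). 0 < x \<and> 0 < y \<and> g = y - x}
      = infsum (M a b) {p \<in> fib g. fst p < 0 \<and> 0 < snd p}"
  proof (rule infsum_reindex_invol[where \<phi>="\<lambda>p. (- fst p, snd p)"])
    fix p :: "'g \<times> 'g" assume p: "p \<in> {(x, y). 0 < x \<and> 0 < y \<and> g = y - x}"
    obtain x y where xy: "p = (x, y)" by fastforce
    have h: "0 < x" "0 < y" "g = y - x" using p xy by auto
    show "(- fst p, snd p) \<in> {p \<in> fib g. fst p < 0 \<and> 0 < snd p}" using h xy by (simp add: fib_def)
    have "\<not> 0 \<le> - x + y" using h g by simp
    then show "M a b (- fst p, snd p) = (case p of (x, y) \<Rightarrow> L y (a (- x) * b y))"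
      using h xy by (simp add: mm_np2)
  next
    fix q :: "'g \<times> 'g" assume "q \<in> {p \<in> fib g. fst p < 0 \<and> 0 < snd p}"
    then show "(- fst q, snd q) \<in> {(x, y). 0 < x \<and> 0 < y \<and> g = y - x}" by (auto simp: fib_def)
  qed simp
  have e3: "infsum (\<lambda>(x, y). \<alpha> y (a (- x)) * b (- y)) {(x, y). 0 \<le> x \<and> 0 \<le> y \<and> g = - x - y}
      = infsum (M a b) {p \<in> fib g. fst p \<le> 0 \<and> snd p \<le> 0}"
  proof (rule infsum_reindex_invol[where \<phi>="\<lambda>p. (- fst p, - snd p)"])
    fix p :: "'g \<times> 'g" assume p: "p \<in> {(x, y). 0 \<le> x \<and> 0 \<le> y \<and> g = - x - y}"
    obtain x y where xy: "p = (x, y)" by fastforce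
    have h: "0 \<le> x" "0 \<le> y" "g = - x - y" using p xy by auto
    show "(- fst p, - snd p) \<in> {p \<in> fib g. fst p \<le> 0 \<and> snd p \<le> 0}" using h xy by (simp add: fib_def)
    have "\<not> (0 \<le> - x \<and> 0 \<le> - y)"
    proof
      assume "0 \<le> - x \<and> 0 \<le> - y"
      then have "x = 0" "y = 0" using h by auto
      then show False using h gn by simp
    qed
    moreover have "- x \<le> 0" "- y \<le> 0" using h by auto
    ultimately show "M a b (- fst p, - snd p) = (case p of (x, y) \<Rightarrow> \<alpha> y (a (- x)) * b (- y))"
      using xy by (simp add: mm_nn)
  next
    fix q :: "'g \<times> 'g" assume "q \<in> {p \<in> fib g. fst p \<le> 0 \<and> snd p \<le> 0}"
    then show "(- fst q, - snd q) \<in> {(x, y). 0 \<le> x \<and> 0 \<le> y \<and> g = - x - y}"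
      by (auto simp: fib_def algebra_simps)
  qed simp
  have "infsum (M a b) (fib g) = infsum (M a b) {p \<in> fib g. 0 < fst p \<and> snd p < 0}
      + infsum (M a b) {p \<in> fib g. fst p < 0 \<and> 0 < snd p} + infsum (M a b) {p \<in> fib g. fst p \<le> 0 \<and> snd p \<le> 0}"
    by (subst fib_split_neg[OF gn], rule infsum_split3[OF mm_summable(1)[OF a b]]) auto
  then show ?thesis using g unfolding l1_mult_def by (simp add: e1 e2 e3)
qed

end

context csys
begin

lemma Sigma_fib_reindex:
  "(G summable_on Sigma UNIV fib \<longleftrightarrow> (\<lambda>p. G (fst p + snd p, p)) summable_on UNIV)
   \<and> infsum G (Sigma UNIV fib) = infsum (\<lambda>p. G (fst p + snd p, p)) UNIV"
proof
  show "G summable_on Sigma UNIV fib \<longleftrightarrow> (\<lambda>p. G (fst p + snd p, p)) summable_on UNIV"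
    by (rule summable_on_reindex_bij_witness[where i=snd and j="\<lambda>p. (fst p + snd p, p)", symmetric])
       (auto simp: fib_def)
  show "infsum G (Sigma UNIV fib) = infsum (\<lambda>p. G (fst p + snd p, p)) UNIV"
    by (rule infsum_reindex_bij_witness[where i=snd and j="\<lambda>p. (fst p + snd p, p)", symmetric])
       (auto simp: fib_def)
qed

lemma abs1_mult:
  assumes a: "abs1 a" and b: "abs1 b"
  shows "abs1 (l1_mult \<alpha> L a b)"
proof -
  define G where "G g = infsum (\<lambda>p. norm (M a b p)) (fib g)" for g
  have "(\<lambda>q. norm (M a b (snd q))) summable_on Sigma UNIV fib"
    using Sigma_fib_reindex[of "\<lambda>q. norm (M a b (snd q))"] mm_summable(2)[OF a b, of UNIV] by simp
  from Infinite_Sum.abs_summable_on_Sigma_iff[THEN iffD1, OF this]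
  have "(\<lambda>g. norm (infsum (\<lambda>p. norm (M a b (snd (g, p)))) (fib g))) summable_on UNIV"
    by (rule conjunct2)
  then have Gs0: "(\<lambda>g. norm (G g)) summable_on UNIV" unfolding G_def by simp
  have G0: "0 \<le> G g" for g unfolding G_def by (rule infsum_nonneg) simp
  have Gs: "G summable_on UNIV" using Gs0 G0 by simp
  have le: "norm (l1_mult \<alpha> L a b g) \<le> G g" for g
    unfolding l1_mult_fib[OF a b] G_def by (rule norm_infsum_bound[OF mm_summable(2)[OF a b]])
  show ?thesis unfolding abs1_def
    by (rule summable_on_comparison_test[OF Gs le]) simp
qed

lemma RHO_mult:
  assumes la: "l1c a" and lb: "l1c b" and a: "abs1 a" and b: "abs1 b"
  shows "RHO (l1_mult \<alpha> L a b) h = RHO a (RHO b h)"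
proof -
  have s1: "(\<lambda>p. Wop (fst p + snd p) (M a b p) h) summable_on UNIV"
  proof -
    have "(\<lambda>p. norm (M a b p) * norm h) summable_on UNIV"
      by (rule summable_on_cmult_left[OF mm_summable(2)[OF a b]])
    then show ?thesis
      by (rule abs_summable_on_comparison'(1)) (rule Wop_norm)
  qed
  have blk: "Wop (fst p + snd p) (M a b p) h = Wop (fst p) (a (fst p)) (Wop (snd p) (b (snd p)) h)" for p
    using block[OF la lb, of "fst p" "snd p" h] by simp
  have s2: "(\<lambda>q. Wop (fst q) (M a b (snd q)) h) summable_on Sigma UNIV fib"
    using Sigma_fib_reindex[of "\<lambda>q. Wop (fst q) (M a b (snd q)) h"] s1 by simp
  have s3: "(\<lambda>q. Wop (fst q) (a (fst q)) (Wop (snd q) (b (snd q)) h)) summable_on Sigma UNIV (\<lambda>_. UNIV)"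
  proof -
    have "(\<lambda>p. Wop (fst p) (a (fst p)) (Wop (snd p) (b (snd p)) h)) summable_on UNIV"
      using s1 blk by simp
    then show ?thesis by simp
  qed
  have "RHO (l1_mult \<alpha> L a b) h = infsum (\<lambda>g. Wop g (infsum (M a b) (fib g)) h) UNIV"
    unfolding RHO_def l1_mult_fib[OF a b] ..
  also have "\<dots> = infsum (\<lambda>g. infsum (\<lambda>p. Wop g (M a b p) h) (fib g)) UNIV"
    by (rule infsum_cong) (rule infsum_bounded_linear'[OF Wop_bl_c mm_summable(1)[OF a b], symmetric])
  also have "\<dots> = infsum (\<lambda>q. Wop (fst q) (M a b (snd q)) h) (Sigma UNIV fib)"
    using infsum_Sigma_banach[OF s2] by simp
  also have "\<dots> = infsum (\<lambda>p. Wop (fst p + snd p) (M a b p) h) UNIV"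
    using Sigma_fib_reindex[of "\<lambda>q. Wop (fst q) (M a b (snd q)) h"] by simp
  also have "\<dots> = infsum (\<lambda>q. Wop (fst q) (a (fst q)) (Wop (snd q) (b (snd q)) h)) (Sigma UNIV (\<lambda>_. UNIV))"
    using blk by simp
  also have "\<dots> = infsum (\<lambda>x. infsum (\<lambda>y. Wop x (a x) (Wop y (b y) h)) UNIV) UNIV"
    using infsum_Sigma_banach[OF s3] by simp
  also have "\<dots> = infsum (\<lambda>x. Wop x (a x) (RHO b h)) UNIV"
    unfolding RHO_def
    by (rule infsum_cong) (rule infsum_bounded_linear'[OF Wop_bl Wop_summable(1)[OF b]])
  also have "\<dots> = RHO a (RHO b h)" unfolding RHO_def ..
  finally show ?thesis .
qed

end

context csys
begin

lemma l1_set_abs1: "f \<in> l1_set \<alpha> \<Longrightarrow> abs1 f"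
  unfolding l1_set_def abs1_def by blast

lemma abs1_add: "abs1 f \<Longrightarrow> abs1 f' \<Longrightarrow> abs1 (l1_add f f')"
proof -
  assume f: "abs1 f" and f': "abs1 f'"
  have "(\<lambda>g. norm (f g) + norm (f' g)) summable_on UNIV"
    using f f' unfolding abs1_def by (rule summable_on_add)
  then show ?thesis unfolding abs1_def l1_add_def
    by (rule summable_on_comparison_test) (simp_all add: norm_triangle_ineq)
qed

lemma abs1_scale: "abs1 f \<Longrightarrow> abs1 (l1_scale c f)"
proof -
  assume f: "abs1 f"
  have "(\<lambda>g. cmod c * norm (f g)) summable_on UNIV"
    using f unfolding abs1_def by (rule summable_on_cmult_right)
  then show ?thesis unfolding abs1_def l1_scale_def by (simp add: norm_scaleC)
qed

lemma abs1_star: "abs1 f \<Longrightarrow> abs1 (l1_star f)"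
proof -
  assume f: "abs1 f"
  have "(\<lambda>g. norm (f g)) summable_on UNIV" using f unfolding abs1_def .
  moreover have "((\<lambda>g. norm (f g)) summable_on UNIV) \<longleftrightarrow> ((\<lambda>g. norm (f (- g))) summable_on UNIV)"
    by (rule summable_reindex_invol[where \<phi>=uminus]) auto
  ultimately show ?thesis unfolding abs1_def l1_star_def by simp
qed

lemma RHO_add_h:
  assumes f: "abs1 f"
  shows "RHO f (h + k) = RHO f h + RHO f k"
proof -
  have "RHO f (h + k) = infsum (\<lambda>g. Wop g (f g) h + Wop g (f g) k) UNIV"
    unfolding RHO_def by (simp add: bounded_opD(1)[OF Wop_bounded_op])
  also have "\<dots> = RHO f h + RHO f k"
    unfolding RHO_def by (rule infsum_add[OF Wop_summable(1)[OF f] Wop_summable(1)[OF f]])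
  finally show ?thesis .
qed

lemma RHO_scale_h:
  assumes f: "abs1 f"
  shows "RHO f (scaleC c h) = scaleC c (RHO f h)"
proof -
  have "RHO f (scaleC c h) = infsum (\<lambda>g. scaleC c (Wop g (f g) h)) UNIV"
    unfolding RHO_def by (simp add: bounded_opD(2)[OF Wop_bounded_op])
  also have "\<dots> = scaleC c (RHO f h)"
    unfolding RHO_def by (rule infsum_bounded_linear'[OF bounded_linear_scaleC Wop_summable(1)[OF f]])
  finally show ?thesis .
qed

lemma RHO_bound:
  assumes f: "abs1 f"
  shows "norm (RHO f h) \<le> infsum (\<lambda>g. norm (f g)) UNIV * norm h"
proof -
  have "norm (RHO f h) \<le> infsum (\<lambda>g. norm (Wop g (f g) h)) UNIV"
    unfolding RHO_def by (rule norm_infsum_bound[OF Wop_summable(2)[OF f]])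
  also have "\<dots> \<le> infsum (\<lambda>g. norm (f g) * norm h) UNIV"
    by (rule infsum_mono[OF Wop_summable(2)[OF f] summable_on_cmult_left[OF f[unfolded abs1_def]]])
       (rule Wop_norm)
  also have "\<dots> = infsum (\<lambda>g. norm (f g)) UNIV * norm h"
    by (rule infsum_cmult_left) (use f in \<open>simp add: abs1_def\<close>)
  finally show ?thesis .
qed

lemma RHO_bounded_op:
  assumes f: "abs1 f"
  shows "bounded_op (RHO f)"
  unfolding bounded_op_def using RHO_add_h[OF f] RHO_scale_h[OF f] RHO_bound[OF f] by blast

lemma Wop_add_c: "Wop g (a + b) h = Wop g a h + Wop g b h"
  by (rule linear_add[OF bounded_linear.linear[OF Wop_bl_c]])

lemma Wop_scaleC_c: "Wop g (scaleC c a) h = scaleC c (Wop g a h)"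
proof (cases "0 \<le> g")
  case True then show ?thesis by (simp add: Wop_nonneg is_repD(3)[OF rep])
next
  case False
  then have g: "0 \<le> - g" using not_le_imp_less[of 0 g] by (simp only: neg_0_le_iff_le less_imp_le)
  show ?thesis using False by (simp add: Wop_def is_repD(3)[OF rep] bounded_opD(2)[OF Usb[OF g]])
qed

lemma RHO_add:
  assumes f: "abs1 f" and f': "abs1 f'"
  shows "RHO (l1_add f f') h = RHO f h + RHO f' h"
proof -
  have "RHO (l1_add f f') h = infsum (\<lambda>g. Wop g (f g) h + Wop g (f' g) h) UNIV"
    unfolding RHO_def l1_add_def by (simp add: Wop_add_c)
  also have "\<dots> = RHO f h + RHO f' h"
    unfolding RHO_def by (rule infsum_add[OF Wop_summable(1)[OF f] Wop_summable(1)[OF f']])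
  finally show ?thesis .
qed

lemma RHO_scale:
  assumes f: "abs1 f"
  shows "RHO (l1_scale c f) h = scaleC c (RHO f h)"
proof -
  have "RHO (l1_scale c f) h = infsum (\<lambda>g. scaleC c (Wop g (f g) h)) UNIV"
    unfolding RHO_def l1_scale_def by (simp add: Wop_scaleC_c)
  also have "\<dots> = scaleC c (RHO f h)"
    unfolding RHO_def by (rule infsum_bounded_linear'[OF bounded_linear_scaleC Wop_summable(1)[OF f]])
  finally show ?thesis .
qed

lemma Wop_adj: "cinner (Wop g c x) y = cinner x (Wop (- g) (cstar c) y)"
proof (cases "0 \<le> g")
  case True
  have "cinner (Wop g c x) y = cinner (\<pi> c (U g x)) y" using True by (simp add: Wop_nonneg)
  also have "\<dots> = cinner (U g x) (\<pi> (cstar c) y)" by (rule rep_adj[OF rep])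
  also have "\<dots> = cinner x (Us g (\<pi> (cstar c) y))" by (rule U_adj[OF True])
  also have "Us g (\<pi> (cstar c) y) = Wop (- g) (cstar c) y"
    using True by (subst Wop_nonpos) simp_all
  finally show ?thesis .
next
  case False
  then have g: "0 \<le> - g" using not_le_imp_less[of 0 g] by (simp only: neg_0_le_iff_le less_imp_le)
  have "cinner (Wop g c x) y = cinner (Us (- g) (\<pi> c x)) y" using False by (simp add: Wop_def)
  also have "\<dots> = cinner (\<pi> c x) (U (- g) y)" by (rule adj_char2[OF Ub[OF g]])
  also have "\<dots> = cinner x (\<pi> (cstar c) (U (- g) y))" by (rule rep_adj[OF rep])
  also have "\<pi> (cstar c) (U (- g) y) = Wop (- g) (cstar c) y" using g by (simp add: Wop_nonneg)
  finally show ?thesis .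
qed

lemma RHO_star:
  assumes f: "abs1 f"
  shows "adj (RHO f) = RHO (l1_star f)"
proof (rule adj_eqI)
  fix x y
  have "cinner (RHO f x) y = infsum (\<lambda>g. cinner (Wop g (f g) x) y) UNIV"
    unfolding RHO_def by (rule infsum_bounded_linear'[OF bounded_linear_cinner_left Wop_summable(1)[OF f], symmetric])
  also have "\<dots> = infsum (\<lambda>g. cinner x (Wop (- g) (cstar (f g)) y)) UNIV"
    by (simp add: Wop_adj)
  also have "\<dots> = infsum (\<lambda>g. cinner x (Wop g (l1_star f g) y)) UNIV"
    by (rule infsum_reindex_invol[where \<phi>=uminus]) (auto simp: l1_star_def)
  also have "\<dots> = cinner x (RHO (l1_star f) y)"
    unfolding RHO_def by (rule infsum_bounded_linear'[OF bounded_linear_cinner_right Wop_summable(1)[OF abs1_star[OF f]]])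
  finally show "cinner (RHO f x) y = cinner x (RHO (l1_star f) y)" .
qed

lemma IF_eq: "abs1 f \<Longrightarrow> integrated_form \<pi> U f = RHO f"
  by (rule ext) (rule integrated_form_RHO)

end

theorem proposition5p3:
  fixes \<alpha> :: "'g::linordered_ab_group_add \<Rightarrow> 'a::cstar_algebra_1 \<Rightarrow> 'a"
    and L :: "'g \<Rightarrow> 'a \<Rightarrow> 'a"
    and \<pi> :: "'a \<Rightarrow> 'h::chilbert_space \<Rightarrow> 'h"
    and U :: "'g \<Rightarrow> 'h \<Rightarrow> 'h"
  assumes "dyn_system \<alpha>"
    and "finely_representable TYPE('k::chilbert_space) \<alpha>"
    and "complete_transfer_action \<alpha> L"
    and "covariant_rep \<alpha> L \<pi> U"
  shows "(\<forall>f\<in>l1_set \<alpha>. \<forall>h.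
            (\<lambda>x. adj (U x) (\<pi> (f (- x)) h)) summable_on {x. 0 < x}
          \<and> (\<lambda>x. \<pi> (f x) (U x h)) summable_on {x. 0 < x})
       \<and> l1_representation \<alpha> L (integrated_form \<pi> U)"
proof -
  interpret csys \<alpha> L \<pi> U using assms(1,3,4) by unfold_locales
  have part1: "\<forall>f\<in>l1_set \<alpha>. \<forall>h.
            (\<lambda>x. adj (U x) (\<pi> (f (- x)) h)) summable_on {x. 0 < x}
          \<and> (\<lambda>x. \<pi> (f x) (U x h)) summable_on {x. 0 < x}"
    using integrated_form_summable l1_set_abs1 by blast
  have r1: "\<forall>f\<in>l1_set \<alpha>. bounded_op (integrated_form \<pi> U f)"
    using IF_eq RHO_bounded_op l1_set_abs1 by simp
  have r2: "\<forall>f\<in>l1_set \<alpha>. \<forall>f'\<in>l1_set \<alpha>.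
      integrated_form \<pi> U (l1_add f f') = (\<lambda>h. integrated_form \<pi> U f h + integrated_form \<pi> U f' h)"
  proof (intro ballI)
    fix f f' assume f: "f \<in> l1_set \<alpha>" and f': "f' \<in> l1_set \<alpha>"
    note A = l1_set_abs1[OF f] l1_set_abs1[OF f']
    show "integrated_form \<pi> U (l1_add f f') = (\<lambda>h. integrated_form \<pi> U f h + integrated_form \<pi> U f' h)"
      unfolding IF_eq[OF abs1_add[OF A]] IF_eq[OF A(1)] IF_eq[OF A(2)]
      by (rule ext) (rule RHO_add[OF A])
  qed
  have r3: "\<forall>c. \<forall>f\<in>l1_set \<alpha>. integrated_form \<pi> U (l1_scale c f) = (\<lambda>h. scaleC c (integrated_form \<pi> U f h))"
  proof (intro allI ballI)
    fix c f assume f: "f \<in> l1_set \<alpha>"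
    note A = l1_set_abs1[OF f]
    show "integrated_form \<pi> U (l1_scale c f) = (\<lambda>h. scaleC c (integrated_form \<pi> U f h))"
      unfolding IF_eq[OF abs1_scale[OF A]] IF_eq[OF A]
      by (rule ext) (rule RHO_scale[OF A])
  qed
  have r4: "\<forall>f\<in>l1_set \<alpha>. \<forall>f'\<in>l1_set \<alpha>.
      integrated_form \<pi> U (l1_mult \<alpha> L f f') = integrated_form \<pi> U f \<circ> integrated_form \<pi> U f'"
  proof (intro ballI)
    fix f f' assume f: "f \<in> l1_set \<alpha>" and f': "f' \<in> l1_set \<alpha>"
    note A = l1_set_abs1[OF f] l1_set_abs1[OF f']
    show "integrated_form \<pi> U (l1_mult \<alpha> L f f') = integrated_form \<pi> U f \<circ> integrated_form \<pi> U f'"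
      unfolding IF_eq[OF abs1_mult[OF A]] IF_eq[OF A(1)] IF_eq[OF A(2)]
      by (rule ext) (simp add: RHO_mult[OF l1_set_l1c[OF f] l1_set_l1c[OF f'] A])
  qed
  have r5: "\<forall>f\<in>l1_set \<alpha>. integrated_form \<pi> U (l1_star f) = adj (integrated_form \<pi> U f)"
    using IF_eq RHO_star l1_set_abs1 abs1_star by simp
  show ?thesis using part1 r1 r2 r3 r4 r5 unfolding l1_representation_def by blast
qed

end
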